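(* Let $P$ be a connected minuscule poset, i.e., $P$ is isomorphic to one of: $\mathbf{a}\times\mathbf{b}$ ($a,b\ge1$); the interval $[\varnothing,(b,b)]$ of Young's lattice ($b\ge1$); $P_{a,1,1,a}$ ($a\ge1$); $P(E_6)$; $P(E_7)$. Then $P$ is a distributive lattice, $P\cong J(Q)$ for a (unique) finite poset $Q$, and $P$ is tCDE (i.e., $J(Q)$ is tCDE).
   Context: $\mathbf{a}$ is the chain with $a$ elements; $\times$ is the direct product. Young's lattice: partitions ordered by componentwise $\le$. $P_{a,1,1,a}$ is the poset on $w_1,\ldots,w_a,x_1,y_1,z_1,\ldots,z_a$ with cover relations $w_1\lessdot\cdots\lessdot w_a$, $w_a\lessdot x_1$, $w_a\lessdot y_1$, $x_1\lessdot z_1$, $y_1\lessdot z_1$, $z_1\lessdot\cdots\lessdot z_a$. $P^{\mathrm{shift}}_{\delta_4}$ is the set of boxes $[i,j]$, $1\le i\le j\le4$, ordered componentwise; $P(E_6):=J(P^{\mathrm{shift}}_{\delta_4})$ and $P(E_7):=J(P(E_6))$. $J(Q)$ is the lattice of order ideals of $Q$ under inclusion; $\mathrm{ddeg}$ is the number of covered elements; $\mathrm{uni}$ is uniform. $\mathcal{T}^+_q(I)=1$ iff $q\notin I$ and $q$ minimal in $Q\setminus I$; $\mathcal{T}^-_q(I)=1$ iff $q\in I$ and $q$ maximal in $I$. $\mu$ on $J(Q)$ is toggle-symmetric if $\mathbb{E}(\mu;\mathcal{T}^+_q)=\mathbb{E}(\mu;\mathcal{T}^-_q)$ for all $q\in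 Q$; $J(Q)$ is tCDE if $\mathbb{E}(\mu;\mathrm{ddeg})=\mathbb{E}(\mathrm{uni}_{J(Q)};\mathrm{ddeg})$ for every toggle-symmetric $\mu$. *)

theory Defs
  imports Complex_Main
begin

definition partial_order_on' :: "'a set \<Rightarrow> ('a \<Rightarrow> 'a \<Rightarrow> bool) \<Rightarrow> bool" where
  "partial_order_on' P le \<longleftrightarrow>
     (\<forall>x\<in>P. le x x) \<and>
     (\<forall>x\<in>P. \<forall>y\<in>P. le x y \<and> le y x \<longrightarrow> x = y) \<and>
     (\<forall>x\<in>P. \<forall>y\<in>P. \<forall>z\<in>P. le x y \<and> le y z \<longrightarrow> le x z)"

definition finite_poset :: "'a set \<Rightarrow> ('a \<Rightarrow> 'a \<Rightarrow> bool) \<Rightarrow> bool" where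
  "finite_poset P le \<longleftrightarrow> finite P \<and> partial_order_on' P le"

definition poset_iso :: "'a set \<Rightarrow> ('a \<Rightarrow> 'a \<Rightarrow> bool) \<Rightarrow> 'b set \<Rightarrow> ('b \<Rightarrow> 'b \<Rightarrow> bool) \<Rightarrow> bool" where
  "poset_iso P leP R leR \<longleftrightarrow>
     (\<exists>f. bij_betw f P R \<and> (\<forall>x\<in>P. \<forall>y\<in>P. leP x y \<longleftrightarrow> leR (f x) (f y)))"

definition is_lub :: "'a set \<Rightarrow> ('a \<Rightarrow> 'a \<Rightarrow> bool) \<Rightarrow> 'a \<Rightarrow> 'a \<Rightarrow> 'a \<Rightarrow> bool" where
  "is_lub P le x y s \<longleftrightarrow> s \<in> P \<and> le x s \<and> le y s \<and> (\<forall>u\<in>P. le x u \<and> le y u \<longrightarrow> le s u)"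

definition is_glb :: "'a set \<Rightarrow> ('a \<Rightarrow> 'a \<Rightarrow> bool) \<Rightarrow> 'a \<Rightarrow> 'a \<Rightarrow> 'a \<Rightarrow> bool" where
  "is_glb P le x y m \<longleftrightarrow> m \<in> P \<and> le m x \<and> le m y \<and> (\<forall>u\<in>P. le u x \<and> le u y \<longrightarrow> le u m)"

definition pjoin :: "'a set \<Rightarrow> ('a \<Rightarrow> 'a \<Rightarrow> bool) \<Rightarrow> 'a \<Rightarrow> 'a \<Rightarrow> 'a" where
  "pjoin P le x y = (THE s. is_lub P le x y s)"

definition pmeet :: "'a set \<Rightarrow> ('a \<Rightarrow> 'a \<Rightarrow> bool) \<Rightarrow> 'a \<Rightarrow> 'a \<Rightarrow> 'a" where
  "pmeet P le x y = (THE m. is_glb P le x y m)"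

definition lattice_on :: "'a set \<Rightarrow> ('a \<Rightarrow> 'a \<Rightarrow> bool) \<Rightarrow> bool" where
  "lattice_on P le \<longleftrightarrow> partial_order_on' P le \<and>
     (\<forall>x\<in>P. \<forall>y\<in>P. (\<exists>s. is_lub P le x y s) \<and> (\<exists>m. is_glb P le x y m))"

definition distributive_lattice_on :: "'a set \<Rightarrow> ('a \<Rightarrow> 'a \<Rightarrow> bool) \<Rightarrow> bool" where
  "distributive_lattice_on P le \<longleftrightarrow> lattice_on P le \<and>
     (\<forall>x\<in>P. \<forall>y\<in>P. \<forall>z\<in>P.
        pmeet P le x (pjoin P le y z) = pjoin P le (pmeet P le x y) (pmeet P le x z))"

definition order_ideals :: "'a set \<Rightarrow> ('a \<Rightarrow> 'a \<Rightarrow> bool) \<Rightarrow> 'a set set" where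
  "order_ideals Q le = {I. I \<subseteq> Q \<and> (\<forall>x\<in>I. \<forall>y\<in>Q. le y x \<longrightarrow> y \<in> I)}"

definition toggle_plus :: "'a set \<Rightarrow> ('a \<Rightarrow> 'a \<Rightarrow> bool) \<Rightarrow> 'a \<Rightarrow> 'a set \<Rightarrow> real" where
  "toggle_plus Q le q I =
     (if q \<in> Q \<and> q \<notin> I \<and> (\<forall>p\<in>Q - I. le p q \<longrightarrow> p = q) then 1 else 0)"

definition toggle_minus :: "'a set \<Rightarrow> ('a \<Rightarrow> 'a \<Rightarrow> bool) \<Rightarrow> 'a \<Rightarrow> 'a set \<Rightarrow> real" where
  "toggle_minus Q le q I =
     (if q \<in> I \<and> (\<forall>p\<in>I. le q p \<longrightarrow> p = q) then 1 else 0)"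

definition ddeg :: "'a set \<Rightarrow> ('a \<Rightarrow> 'a \<Rightarrow> bool) \<Rightarrow> 'a set \<Rightarrow> real" where
  "ddeg Q le I = real (card {I' \<in> order_ideals Q le. I' \<subset> I \<and>
       \<not> (\<exists>K\<in>order_ideals Q le. I' \<subset> K \<and> K \<subset> I)})"

definition expect :: "'b set \<Rightarrow> ('b \<Rightarrow> real) \<Rightarrow> ('b \<Rightarrow> real) \<Rightarrow> real" where
  "expect L \<mu> f = (\<Sum>I\<in>L. \<mu> I * f I)"

definition prob_distr :: "'b set \<Rightarrow> ('b \<Rightarrow> real) \<Rightarrow> bool" where
  "prob_distr L \<mu> \<longleftrightarrow> (\<forall>I\<in>L. 0 \<le> \<mu> I) \<and> (\<Sum>I\<in>L. \<mu> I) = 1"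

definition uniform :: "'b set \<Rightarrow> 'b \<Rightarrow> real" where
  "uniform L I = 1 / real (card L)"

definition toggle_symmetric :: "'a set \<Rightarrow> ('a \<Rightarrow> 'a \<Rightarrow> bool) \<Rightarrow> ('a set \<Rightarrow> real) \<Rightarrow> bool" where
  "toggle_symmetric Q le \<mu> \<longleftrightarrow>
     (\<forall>q\<in>Q. expect (order_ideals Q le) \<mu> (toggle_plus Q le q)
            = expect (order_ideals Q le) \<mu> (toggle_minus Q le q))"

definition tCDE :: "'a set \<Rightarrow> ('a \<Rightarrow> 'a \<Rightarrow> bool) \<Rightarrow> bool" where
  "tCDE Q le \<longleftrightarrow>
     (\<forall>\<mu>. prob_distr (order_ideals Q le) \<mu> \<and> toggle_symmetric Q le \<mu> \<longrightarrow>
        expect (order_ideals Q le) \<mu> (ddeg Q le)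
        = expect (order_ideals Q le) (uniform (order_ideals Q le)) (ddeg Q le))"

definition chain_prod :: "nat \<Rightarrow> nat \<Rightarrow> (nat \<times> nat) set" where
  "chain_prod a b = {1..a} \<times> {1..b}"

definition prod_le :: "nat \<times> nat \<Rightarrow> nat \<times> nat \<Rightarrow> bool" where
  "prod_le p q \<longleftrightarrow> fst p \<le> fst q \<and> snd p \<le> snd q"

text \<open>Interval [empty,(b,b)] of Young's lattice: partitions are weakly decreasing
  nat sequences (finitely supported), ordered componentwise.\<close>
definition young_interval :: "nat \<Rightarrow> (nat \<Rightarrow> nat) set" where
  "young_interval b = {lam. antimono lam \<and> (\<forall>i. lam i \<le> (if i < 2 then b else 0))}"

datatype pelt = W nat | X | Y | Z nat

definition P_a11a :: "nat \<Rightarrow> pelt set" where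
  "P_a11a a = W ` {1..a} \<union> {X, Y} \<union> Z ` {1..a}"

definition cover_a11a :: "nat \<Rightarrow> pelt \<Rightarrow> pelt \<Rightarrow> bool" where
  "cover_a11a a u v \<longleftrightarrow>
     (\<exists>i. 1 \<le> i \<and> i < a \<and> u = W i \<and> v = W (Suc i)) \<or>
     (u = W a \<and> v = X) \<or> (u = W a \<and> v = Y) \<or>
     (u = X \<and> v = Z 1) \<or> (u = Y \<and> v = Z 1) \<or>
     (\<exists>i. 1 \<le> i \<and> i < a \<and> u = Z i \<and> v = Z (Suc i))"

definition le_a11a :: "nat \<Rightarrow> pelt \<Rightarrow> pelt \<Rightarrow> bool" where
  "le_a11a a = (cover_a11a a)\<^sup>*\<^sup>*"

definition shifted_delta4 :: "(nat \<times> nat) set" where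
  "shifted_delta4 = {(i, j). 1 \<le> i \<and> i \<le> j \<and> j \<le> 4}"

definition PE6 :: "(nat \<times> nat) set set" where
  "PE6 = order_ideals shifted_delta4 prod_le"

definition PE7 :: "(nat \<times> nat) set set set" where
  "PE7 = order_ideals PE6 (\<subseteq>)"

definition connected_minuscule :: "'a set \<Rightarrow> ('a \<Rightarrow> 'a \<Rightarrow> bool) \<Rightarrow> bool" where
  "connected_minuscule P le \<longleftrightarrow>
     (\<exists>a b. 1 \<le> a \<and> 1 \<le> b \<and> poset_iso P le (chain_prod a b) prod_le) \<or>
     (\<exists>b. 1 \<le> b \<and> poset_iso P le (young_interval b) (\<le>)) \<or>
     (\<exists>a. 1 \<le> a \<and> poset_iso P le (P_a11a a) (le_a11a a)) \<or>
     poset_iso P le PE6 (\<subseteq>) \<or>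
     poset_iso P le PE7 (\<subseteq>)"

end

theory Submission
  imports Defs
begin


abbreviation "po Q le \<equiv> partial_order_on' Q le"
abbreviation "JJ Q le \<equiv> order_ideals Q le"

lemma po_refl: "po Q le \<Longrightarrow> x \<in> Q \<Longrightarrow> le x x"
  unfolding partial_order_on'_def by blast
lemma po_antisym: "po Q le \<Longrightarrow> x \<in> Q \<Longrightarrow> y \<in> Q \<Longrightarrow> le x y \<Longrightarrow> le y x \<Longrightarrow> x = y"
  unfolding partial_order_on'_def by blast
lemma po_trans: "po Q le \<Longrightarrow> x \<in> Q \<Longrightarrow> y \<in> Q \<Longrightarrow> z \<in> Q \<Longrightarrow> le x y \<Longrightarrow> le y z \<Longrightarrow> le x z"
  unfolding partial_order_on'_def by blast
lemma po_flip: "po Q le \<Longrightarrow> po Q (\<lambda>x y. le y x)"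
  unfolding partial_order_on'_def by blast
lemma po_subset: "po Q le \<Longrightarrow> S \<subseteq> Q \<Longrightarrow> po S le"
  unfolding partial_order_on'_def by blast

lemma ideal_sub: "I \<in> JJ Q le \<Longrightarrow> I \<subseteq> Q" by (simp add: order_ideals_def)
lemma ideal_down: "I \<in> JJ Q le \<Longrightarrow> x \<in> I \<Longrightarrow> y \<in> Q \<Longrightarrow> le y x \<Longrightarrow> y \<in> I"
  by (auto simp: order_ideals_def)
lemma finite_ideals: "finite Q \<Longrightarrow> finite (JJ Q le)"
  by (rule finite_subset[of _ "Pow Q"]) (auto simp: order_ideals_def)
lemma empty_ideal: "{} \<in> JJ Q le" by (simp add: order_ideals_def)

lemma exists_minimal:
  assumes "finite S" "S \<noteq> {}" "S \<subseteq> Q" "po Q le"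
  shows "\<exists>m\<in>S. \<forall>p\<in>S. le p m \<longrightarrow> p = m"
  using assms
proof (induction S rule: finite_ne_induct)
  case (singleton x) then show ?case by auto
next
  case (insert x F)
  then obtain m where m: "m \<in> F" "\<forall>p\<in>F. le p m \<longrightarrow> p = m" by auto
  have xQ: "x \<in> Q" and FQ: "F \<subseteq> Q" using insert by auto
  show ?case
  proof (cases "le x m")
    case True
    have "\<forall>p\<in>insert x F. le p x \<longrightarrow> p = x"
    proof (intro ballI impI)
      fix p assume p: "p \<in> insert x F" "le p x"
      show "p = x"
      proof (rule ccontr)
        assume "p \<noteq> x"
        then have pF: "p \<in> F" using p by auto
        have "le p m" using po_trans[OF insert(6), of p x m] pF FQ xQ m(1) p(2) True by auto
        then have "p = m" using m pF by auto
        then have "x = m" using po_antisym[OF insert(6), of x m] True p(2) xQ m(1) FQ by auto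
        then show False using insert.hyps(3) m(1) by auto
      qed
    qed
    then show ?thesis by auto
  next
    case False
    then show ?thesis using m by auto
  qed
qed

lemma exists_maximal:
  assumes "finite S" "S \<noteq> {}" "S \<subseteq> Q" "po Q le"
  shows "\<exists>m\<in>S. \<forall>p\<in>S. le m p \<longrightarrow> p = m"
  using exists_minimal[OF assms(1-3) po_flip[OF assms(4)]] by auto

definition maxs :: "('a \<Rightarrow> 'a \<Rightarrow> bool) \<Rightarrow> 'a set \<Rightarrow> 'a set" where
  "maxs le I = {q\<in>I. \<forall>p\<in>I. le q p \<longrightarrow> p = q}"

definition lcov :: "'a set \<Rightarrow> ('a \<Rightarrow> 'a \<Rightarrow> bool) \<Rightarrow> 'a set \<Rightarrow> 'a set set" where
  "lcov Q le I = {I' \<in> JJ Q le. I' \<subset> I \<and> \<not> (\<exists>K\<in>JJ Q le. I' \<subset> K \<and> K \<subset> I)}"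

lemma remove_max_ideal:
  assumes "po Q le" "I \<in> JJ Q le" "m \<in> maxs le I"
  shows "I - {m} \<in> JJ Q le"
proof -
  have "I \<subseteq> Q" using assms ideal_sub by auto
  moreover have "y \<in> I - {m}" if "x \<in> I - {m}" "y \<in> Q" "le y x" for x y
  proof -
    have "y \<in> I" using ideal_down[OF assms(2)] that by auto
    moreover have "y \<noteq> m"
    proof
      assume "y = m"
      then have "x = m" using assms(3) that by (auto simp: maxs_def)
      then show False using that by auto
    qed
    ultimately show ?thesis by auto
  qed
  ultimately show ?thesis unfolding order_ideals_def by blast
qed

lemma lcov_eq:
  assumes "finite Q" "po Q le" "I \<in> JJ Q le"
  shows "lcov Q le I = (\<lambda>m. I - {m}) ` maxs le I"
proof
  have IQ: "I \<subseteq> Q" using assms ideal_sub by auto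
  show "lcov Q le I \<subseteq> (\<lambda>m. I - {m}) ` maxs le I"
  proof
    fix I' assume "I' \<in> lcov Q le I"
    then have I': "I' \<in> JJ Q le" "I' \<subset> I" "\<not> (\<exists>K\<in>JJ Q le. I' \<subset> K \<and> K \<subset> I)"
      by (auto simp: lcov_def)
    have "finite (I - I')" using IQ assms(1) finite_subset by blast
    moreover have "I - I' \<noteq> {}" using I' by auto
    ultimately obtain m where m: "m \<in> I - I'" "\<forall>p\<in>I - I'. le p m \<longrightarrow> p = m"
      using exists_minimal[of "I - I'" Q le] IQ assms(2) by blast
    have K: "insert m I' \<in> JJ Q le"
    proof -
      have "insert m I' \<subseteq> Q" using IQ m ideal_sub[OF I'(1)] by auto
      moreover have "y \<in> insert m I'" if "x \<in> insert m I'" "y \<in> Q" "le y x" for x y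
      proof (cases "x = m")
        case True
        have "y \<in> I" using ideal_down[OF assms(3), of m y] m that True by auto
        then show ?thesis using m(2) that True by auto
      next
        case False
        then show ?thesis using ideal_down[OF I'(1)] that by auto
      qed
      ultimately show ?thesis unfolding order_ideals_def by blast
    qed
    have "I' \<subset> insert m I'" using m by auto
    moreover have "insert m I' \<subseteq> I" using m I' by auto
    ultimately have eqI: "insert m I' = I" using I'(3) K by blast
    then have I'eq: "I' = I - {m}" using m by auto
    have "m \<in> maxs le I"
    proof -
      have "p = m" if "p \<in> I" "le m p" for p
      proof (rule ccontr)
        assume "p \<noteq> m"
        then have "p \<in> I'" using that eqI by auto
        then have "m \<in> I'" using ideal_down[OF I'(1), of p m] that IQ m by auto
        then show False using m by auto
      qed
      then show ?thesis using m by (auto simp: maxs_def)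
    qed
    then show "I' \<in> (\<lambda>m. I - {m}) ` maxs le I" using I'eq by auto
  qed
  show "(\<lambda>m. I - {m}) ` maxs le I \<subseteq> lcov Q le I"
  proof
    fix I' assume "I' \<in> (\<lambda>m. I - {m}) ` maxs le I"
    then obtain m where m: "m \<in> maxs le I" "I' = I - {m}" by auto
    have "I' \<in> JJ Q le" using remove_max_ideal[OF assms(2,3) m(1)] m by auto
    moreover have "I' \<subset> I" using m by (auto simp: maxs_def)
    moreover have "\<not> (\<exists>K\<in>JJ Q le. I' \<subset> K \<and> K \<subset> I)"
    proof
      assume "\<exists>K\<in>JJ Q le. I' \<subset> K \<and> K \<subset> I"
      then obtain K where "I' \<subset> K" "K \<subset> I" by auto
      then show False using m by auto
    qed
    ultimately show "I' \<in> lcov Q le I" by (auto simp: lcov_def)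
  qed
qed

lemma card_lcov:
  assumes "finite Q" "po Q le" "I \<in> JJ Q le"
  shows "card (lcov Q le I) = card (maxs le I)"
proof -
  have "inj_on (\<lambda>m. I - {m}) (maxs le I)"
    by (rule inj_onI) (auto simp: maxs_def)
  then show ?thesis unfolding lcov_eq[OF assms] by (rule card_image)
qed

lemma sum_if_one: "finite A \<Longrightarrow> (\<Sum>x\<in>A. (if P x then 1 else 0 :: real)) = real (card {x\<in>A. P x})"
  by (simp add: sum.If_cases Int_def)

lemma ddeg_eq:
  assumes "finite Q" "po Q le" "I \<in> JJ Q le"
  shows "ddeg Q le I = (\<Sum>q\<in>Q. toggle_minus Q le q I)"
proof -
  have "ddeg Q le I = real (card (maxs le I))"
    using card_lcov[OF assms] by (simp add: ddeg_def lcov_def)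
  also have "maxs le I = {q\<in>Q. q \<in> I \<and> (\<forall>p\<in>I. le q p \<longrightarrow> p = q)}"
    using ideal_sub[OF assms(3)] by (auto simp: maxs_def)
  also have "real (card \<dots>) = (\<Sum>q\<in>Q. toggle_minus Q le q I)"
    unfolding toggle_minus_def using sum_if_one[OF assms(1)] by simp
  finally show ?thesis .
qed


lemma insert_ideal:
  assumes "po Q le" "I \<in> JJ Q le" "q \<in> Q" "q \<notin> I" "\<forall>p\<in>Q - I. le p q \<longrightarrow> p = q"
  shows "insert q I \<in> JJ Q le"
proof -
  have "insert q I \<subseteq> Q" using assms ideal_sub[OF assms(2)] by auto
  moreover have "y \<in> insert q I" if "x \<in> insert q I" "y \<in> Q" "le y x" for x y
  proof (cases "x = q")
    case True then show ?thesis using assms(5) that by blast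
  next
    case False then show ?thesis using ideal_down[OF assms(2)] that by blast
  qed
  ultimately show ?thesis unfolding order_ideals_def by blast
qed

lemma tog_count:
  assumes "finite Q" "po Q le" "q \<in> Q"
  shows "(\<Sum>I\<in>JJ Q le. toggle_plus Q le q I) = (\<Sum>I\<in>JJ Q le. toggle_minus Q le q I)"
proof -
  let ?A = "{I\<in>JJ Q le. q \<in> Q \<and> q \<notin> I \<and> (\<forall>p\<in>Q - I. le p q \<longrightarrow> p = q)}"
  let ?B = "{I\<in>JJ Q le. q \<in> I \<and> (\<forall>p\<in>I. le q p \<longrightarrow> p = q)}"
  have fin: "finite (JJ Q le)" using finite_ideals[OF assms(1)] .
  have "bij_betw (insert q) ?A ?B"
  proof (rule bij_betw_byWitness[where f' = "\<lambda>I. I - {q}"])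
    show "\<forall>a\<in>?A. insert q a - {q} = a" by auto
    show "\<forall>a'\<in>?B. insert q (a' - {q}) = a'" by auto
    show "insert q ` ?A \<subseteq> ?B"
    proof
      fix I' assume "I' \<in> insert q ` ?A"
      then obtain I where I: "I \<in> ?A" "I' = insert q I" by auto
      have "I' \<in> JJ Q le" using insert_ideal[OF assms(2)] I by auto
      moreover have "p = q" if "p \<in> I'" "le q p" for p
      proof (rule ccontr)
        assume "p \<noteq> q"
        then have "p \<in> I" using that I by auto
        then have "q \<in> I" using ideal_down[of I Q le p q] I assms(3) that by auto
        then show False using I by auto
      qed
      ultimately show "I' \<in> ?B" using I by auto
    qed
    show "(\<lambda>I. I - {q}) ` ?B \<subseteq> ?A"
    proof
      fix I' assume "I' \<in> (\<lambda>I. I - {q}) ` ?B"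
      then obtain I where I: "I \<in> ?B" "I' = I - {q}" by auto
      have "q \<in> maxs le I" using I by (auto simp: maxs_def)
      then have "I' \<in> JJ Q le" using remove_max_ideal[OF assms(2)] I by auto
      moreover have "p = q" if "p \<in> Q - I'" "le p q" for p
      proof (rule ccontr)
        assume "p \<noteq> q"
        then have "p \<notin> I" using that I by auto
        moreover have "I \<in> JJ Q le" "q \<in> I" "p \<in> Q" using I(1) that(1) by auto
        ultimately show False using ideal_down[of I Q le q p] that(2) by blast
      qed
      moreover have "q \<notin> I'" using I(2) by blast
      ultimately show "I' \<in> ?A" using assms(3) by blast
    qed
  qed
  then have "card ?A = card ?B" by (rule bij_betw_same_card)
  then show ?thesis unfolding toggle_plus_def toggle_minus_def
    using sum_if_one[OF fin] by simp
qed

definition cert :: "'a set \<Rightarrow> ('a \<Rightarrow> 'a \<Rightarrow> bool) \<Rightarrow> ('a \<Rightarrow> real) \<Rightarrow> real \<Rightarrow> bool" where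
  "cert Q le c C \<longleftrightarrow> (\<forall>I\<in>JJ Q le.
     (\<Sum>q\<in>Q. (1 + c q) * toggle_minus Q le q I - c q * toggle_plus Q le q I) = C)"

lemma cert_expect:
  assumes "finite Q" "po Q le" "cert Q le c C"
    and sym: "\<forall>q\<in>Q. expect (JJ Q le) \<mu> (toggle_plus Q le q) = expect (JJ Q le) \<mu> (toggle_minus Q le q)"
    and one: "(\<Sum>I\<in>JJ Q le. \<mu> I) = 1"
  shows "expect (JJ Q le) \<mu> (ddeg Q le) = C"
proof -
  let ?J = "JJ Q le"
  let ?d = "\<lambda>q I. toggle_plus Q le q I - toggle_minus Q le q I"
  have dd: "ddeg Q le I = C + (\<Sum>q\<in>Q. c q * ?d q I)" if "I \<in> ?J" for I
  proof -
    have "C = (\<Sum>q\<in>Q. (1 + c q) * toggle_minus Q le q I - c q * toggle_plus Q le q I)"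
      using assms(3) that by (simp add: cert_def)
    also have "\<dots> = (\<Sum>q\<in>Q. toggle_minus Q le q I - c q * ?d q I)"
      by (rule sum.cong) (auto simp: algebra_simps)
    also have "\<dots> = (\<Sum>q\<in>Q. toggle_minus Q le q I) - (\<Sum>q\<in>Q. c q * ?d q I)"
      by (simp add: sum_subtractf)
    finally show ?thesis using ddeg_eq[OF assms(1,2) that] by simp
  qed
  have "expect ?J \<mu> (ddeg Q le) = (\<Sum>I\<in>?J. \<mu> I * (C + (\<Sum>q\<in>Q. c q * ?d q I)))"
    unfolding expect_def by (rule sum.cong) (auto simp: dd)
  also have "\<dots> = C * (\<Sum>I\<in>?J. \<mu> I) + (\<Sum>I\<in>?J. \<Sum>q\<in>Q. c q * (\<mu> I * ?d q I))"
    by (simp add: algebra_simps sum.distrib sum_distrib_left sum_distrib_right)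
  also have "(\<Sum>I\<in>?J. \<Sum>q\<in>Q. c q * (\<mu> I * ?d q I)) = (\<Sum>q\<in>Q. c q * (\<Sum>I\<in>?J. \<mu> I * ?d q I))"
    by (subst sum.swap) (simp add: sum_distrib_left)
  also have "\<dots> = 0"
  proof (rule sum.neutral, rule ballI)
    fix q assume "q \<in> Q"
    then have "(\<Sum>I\<in>?J. \<mu> I * ?d q I) = 0"
      using sym by (simp add: expect_def right_diff_distrib sum_subtractf)
    then show "c q * (\<Sum>I\<in>?J. \<mu> I * ?d q I) = 0" by simp
  qed
  finally show ?thesis using one by simp
qed

lemma cert_tCDE:
  assumes "finite Q" "po Q le" "cert Q le c C"
  shows "tCDE Q le"
proof -
  let ?J = "JJ Q le"
  have fin: "finite ?J" using finite_ideals[OF assms(1)] .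
  have ne: "card ?J \<noteq> 0" using fin empty_ideal[of Q le] by auto
  have u1: "(\<Sum>I\<in>?J. uniform ?J I) = 1" using ne by (simp add: uniform_def)
  have usym: "\<forall>q\<in>Q. expect ?J (uniform ?J) (toggle_plus Q le q) = expect ?J (uniform ?J) (toggle_minus Q le q)"
    using tog_count[OF assms(1,2)] by (simp add: expect_def uniform_def sum_divide_distrib[symmetric])
  have U: "expect ?J (uniform ?J) (ddeg Q le) = C" using cert_expect[OF assms usym u1] .
  show ?thesis unfolding tCDE_def
  proof (intro allI impI)
    fix \<mu> assume "prob_distr ?J \<mu> \<and> toggle_symmetric Q le \<mu>"
    then have "expect ?J \<mu> (ddeg Q le) = C"
      using cert_expect[OF assms] by (auto simp: prob_distr_def toggle_symmetric_def)
    then show "expect ?J \<mu> (ddeg Q le) = expect ?J (uniform ?J) (ddeg Q le)" using U by simp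
  qed
qed


lemma iso_sym:
  assumes "poset_iso P le R leR" shows "poset_iso R leR P le"
proof -
  obtain f where f: "bij_betw f P R" "\<forall>x\<in>P. \<forall>y\<in>P. le x y \<longleftrightarrow> leR (f x) (f y)"
    using assms by (auto simp: poset_iso_def)
  let ?g = "inv_into P f"
  have g: "bij_betw ?g R P" using bij_betw_inv_into[OF f(1)] .
  have fg: "f (?g x) = x" if "x \<in> R" for x using f(1) that
    by (simp add: bij_betw_def f_inv_into_f)
  have "\<forall>x\<in>R. \<forall>y\<in>R. leR x y \<longleftrightarrow> le (?g x) (?g y)"
  proof (intro ballI)
    fix x y assume xy: "x \<in> R" "y \<in> R"
    have "?g x \<in> P" "?g y \<in> P" using g xy bij_betwE by blast+
    then show "leR x y \<longleftrightarrow> le (?g x) (?g y)" using f(2) fg xy by metis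
  qed
  then show ?thesis using g unfolding poset_iso_def by blast
qed

lemma iso_trans:
  assumes "poset_iso P le R leR" "poset_iso R leR S leS" shows "poset_iso P le S leS"
proof -
  obtain f where f: "bij_betw f P R" "\<forall>x\<in>P. \<forall>y\<in>P. le x y \<longleftrightarrow> leR (f x) (f y)"
    using assms by (auto simp: poset_iso_def)
  obtain g where g: "bij_betw g R S" "\<forall>x\<in>R. \<forall>y\<in>R. leR x y \<longleftrightarrow> leS (g x) (g y)"
    using assms by (auto simp: poset_iso_def)
  have "bij_betw (g \<circ> f) P S" using f(1) g(1) by (rule bij_betw_trans)
  moreover have "\<forall>x\<in>P. \<forall>y\<in>P. le x y \<longleftrightarrow> leS ((g \<circ> f) x) ((g \<circ> f) y)"
    using f g bij_betwE[OF f(1)] by auto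
  ultimately show ?thesis unfolding poset_iso_def by blast
qed

lemma iso_po:
  assumes "poset_iso P le R leR" "po R leR" shows "po P le"
proof -
  obtain f where f: "bij_betw f P R" "\<forall>x\<in>P. \<forall>y\<in>P. le x y \<longleftrightarrow> leR (f x) (f y)"
    using assms by (auto simp: poset_iso_def)
  have fR: "\<And>x. x \<in> P \<Longrightarrow> f x \<in> R" using bij_betwE[OF f(1)] by blast
  have inj: "\<And>x y. x \<in> P \<Longrightarrow> y \<in> P \<Longrightarrow> f x = f y \<Longrightarrow> x = y"
    using f(1) by (auto simp: bij_betw_def inj_on_def)
  show ?thesis unfolding partial_order_on'_def
  proof (intro conjI ballI impI)
    fix x assume "x \<in> P" then show "le x x" using f(2) fR po_refl[OF assms(2)] by blast
  next
    fix x y assume xy: "x \<in> P" "y \<in> P" "le x y \<and> le y x"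
    then have "leR (f x) (f y)" "leR (f y) (f x)" using f(2) by auto
    then have "f x = f y" using po_antisym[OF assms(2)] fR xy by blast
    then show "x = y" using inj xy by blast
  next
    fix x y z assume xyz: "x \<in> P" "y \<in> P" "z \<in> P" "le x y \<and> le y z"
    then have "leR (f x) (f y)" "leR (f y) (f z)" using f(2) by auto
    then have "leR (f x) (f z)" using po_trans[OF assms(2)] fR xyz by blast
    then show "le x z" using f(2) xyz by blast
  qed
qed

lemma iso_finite: "poset_iso P le R leR \<Longrightarrow> finite R \<Longrightarrow> finite P"
  unfolding poset_iso_def using bij_betw_finite by blast

lemma image_ideal:
  assumes "bij_betw f Q0 Q" "\<forall>x\<in>Q0. \<forall>y\<in>Q0. le0 x y \<longleftrightarrow> le (f x) (f y)" "I \<in> JJ Q0 le0"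
  shows "f ` I \<in> JJ Q le"
proof -
  have IQ: "I \<subseteq> Q0" using ideal_sub[OF assms(3)] .
  have "f ` I \<subseteq> Q" using IQ bij_betwE[OF assms(1)] by blast
  moreover have "y \<in> f ` I" if xy: "x \<in> f ` I" "y \<in> Q" "le y x" for x y
  proof -
    obtain x0 where x0: "x0 \<in> I" "x = f x0" using xy by auto
    obtain y0 where y0: "y0 \<in> Q0" "y = f y0" using xy assms(1) by (auto simp: bij_betw_def)
    have "le0 y0 x0" using assms(2) x0 y0 IQ xy by auto
    then have "y0 \<in> I" using ideal_down[OF assms(3) x0(1) y0(1)] by auto
    then show ?thesis using y0 by auto
  qed
  ultimately show ?thesis unfolding order_ideals_def by blast
qed

lemma inj_on_img_sub: "inj_on f C \<Longrightarrow> A \<subseteq> C \<Longrightarrow> B \<subseteq> C \<Longrightarrow> f ` A \<subseteq> f ` B \<longleftrightarrow> A \<subseteq> B"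
  using inj_on_image_mem_iff by (metis image_mono image_subset_iff subset_eq)

lemma img_id: "\<forall>x\<in>A. h x = x \<Longrightarrow> h ` A = A" by force

lemma J_iso:
  assumes "bij_betw f Q0 Q" "\<forall>x\<in>Q0. \<forall>y\<in>Q0. le0 x y \<longleftrightarrow> le (f x) (f y)"
  shows "bij_betw (image f) (JJ Q0 le0) (JJ Q le)"
    and "\<forall>I\<in>JJ Q0 le0. \<forall>I2\<in>JJ Q0 le0. I \<subseteq> I2 \<longleftrightarrow> f ` I \<subseteq> f ` I2"
proof -
  have iso: "poset_iso Q0 le0 Q le" using assms unfolding poset_iso_def by blast
  obtain g where g: "bij_betw g Q Q0" "\<forall>x\<in>Q. \<forall>y\<in>Q. le x y \<longleftrightarrow> le0 (g x) (g y)"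
                    "\<forall>x\<in>Q. f (g x) = x"
  proof -
    let ?g = "inv_into Q0 f"
    have "bij_betw ?g Q Q0" using bij_betw_inv_into[OF assms(1)] .
    moreover have "\<forall>x\<in>Q. f (?g x) = x" using assms(1)
      by (simp add: bij_betw_def f_inv_into_f)
    moreover have "\<forall>x\<in>Q. \<forall>y\<in>Q. le x y \<longleftrightarrow> le0 (?g x) (?g y)"
      using assms(2) calculation bij_betwE by metis
    ultimately show ?thesis using that by blast
  qed
  have inj: "inj_on f Q0" using assms(1) by (simp add: bij_betw_def)
  show oo: "\<forall>I\<in>JJ Q0 le0. \<forall>I2\<in>JJ Q0 le0. I \<subseteq> I2 \<longleftrightarrow> f ` I \<subseteq> f ` I2"
    proof (intro ballI)
    fix I I2 assume "I \<in> JJ Q0 le0" "I2 \<in> JJ Q0 le0"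
    then show "I \<subseteq> I2 \<longleftrightarrow> f ` I \<subseteq> f ` I2"
    proof -
      have "I \<subseteq> Q0" "I2 \<subseteq> Q0" using ideal_sub \<open>I \<in> JJ Q0 le0\<close> \<open>I2 \<in> JJ Q0 le0\<close> by auto
      then show ?thesis by (rule inj_on_img_sub[OF inj, symmetric])
    qed
  qed
  have i1: "inj_on (image f) (JJ Q0 le0)"
  proof (rule inj_onI)
    fix I I2 assume "I \<in> JJ Q0 le0" "I2 \<in> JJ Q0 le0" "f ` I = f ` I2"
    then have "I \<subseteq> I2" "I2 \<subseteq> I" using oo by (metis subset_refl)+
    then show "I = I2" by (rule subset_antisym)
  qed
  have i2: "image f ` JJ Q0 le0 \<subseteq> JJ Q le" using image_ideal[OF assms] by blast
  have i3: "JJ Q le \<subseteq> image f ` JJ Q0 le0"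
  proof
    fix I' assume I': "I' \<in> JJ Q le"
    have "g ` I' \<in> JJ Q0 le0" using image_ideal[OF g(1,2) I'] .
    moreover have "f ` (g ` I') = I'"
    proof -
      have "\<forall>x\<in>I'. f (g x) = x" using g(3) ideal_sub[OF I'] by blast
      then have "(\<lambda>x. f (g x)) ` I' = I'" by (rule img_id)
      then show ?thesis by (simp add: image_image)
    qed
    ultimately show "I' \<in> image f ` JJ Q0 le0" by (metis image_eqI)
  qed
  show "bij_betw (image f) (JJ Q0 le0) (JJ Q le)"
    unfolding bij_betw_def using i1 i2 i3 by blast
qed

lemma J_poset_iso:
  assumes "poset_iso Q0 le0 Q le" shows "poset_iso (JJ Q0 le0) (\<subseteq>) (JJ Q le) (\<subseteq>)"
proof -
  obtain f where f: "bij_betw f Q0 Q" "\<forall>x\<in>Q0. \<forall>y\<in>Q0. le0 x y \<longleftrightarrow> le (f x) (f y)"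
    using assms by (auto simp: poset_iso_def)
  show ?thesis unfolding poset_iso_def using J_iso[OF f] by blast
qed

lemma toggle_transfer:
  assumes "bij_betw f Q0 Q" "\<forall>x\<in>Q0. \<forall>y\<in>Q0. le0 x y \<longleftrightarrow> le (f x) (f y)"
    and "I \<in> JJ Q0 le0" "q \<in> Q0"
  shows "toggle_minus Q le (f q) (f ` I) = toggle_minus Q0 le0 q I"
    and "toggle_plus Q le (f q) (f ` I) = toggle_plus Q0 le0 q I"
proof -
  have inj: "inj_on f Q0" using assms(1) by (simp add: bij_betw_def)
  have IQ: "I \<subseteq> Q0" using ideal_sub[OF assms(3)] .
  have mem: "f q \<in> f ` I \<longleftrightarrow> q \<in> I" using inj IQ assms(4) by (auto simp: inj_on_def)
  have mx: "(\<forall>p\<in>f ` I. le (f q) p \<longrightarrow> p = f q) \<longleftrightarrow> (\<forall>p\<in>I. le0 q p \<longrightarrow> p = q)"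
  proof -
    have "(\<forall>p\<in>f ` I. le (f q) p \<longrightarrow> p = f q) \<longleftrightarrow> (\<forall>p\<in>I. le (f q) (f p) \<longrightarrow> f p = f q)" by auto
    also have "\<dots> \<longleftrightarrow> (\<forall>p\<in>I. le0 q p \<longrightarrow> p = q)"
    proof -
      have le_iff: "\<And>p. p \<in> I \<Longrightarrow> le (f q) (f p) \<longleftrightarrow> le0 q p" using assms(2,4) IQ by blast
      have eq_iff: "\<And>p. p \<in> I \<Longrightarrow> f p = f q \<longleftrightarrow> p = q" using inj IQ assms(4) by (auto simp: inj_on_def)
      show ?thesis using le_iff eq_iff by blast
    qed
    finally show ?thesis .
  qed
  show "toggle_minus Q le (f q) (f ` I) = toggle_minus Q0 le0 q I"
    unfolding toggle_minus_def mem mx by (rule refl)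
  have QI: "Q - f ` I = f ` (Q0 - I)"
  proof -
    have "f ` (Q0 - I) = f ` Q0 - f ` I" by (rule inj_on_image_set_diff[OF inj]) (use IQ in auto)
    moreover have "f ` Q0 = Q" using assms(1) by (simp add: bij_betw_def)
    ultimately show ?thesis by simp
  qed
  have mn: "(\<forall>p\<in>Q - f ` I. le p (f q) \<longrightarrow> p = f q) \<longleftrightarrow> (\<forall>p\<in>Q0 - I. le0 p q \<longrightarrow> p = q)"
  proof -
    have "(\<forall>p\<in>Q - f ` I. le p (f q) \<longrightarrow> p = f q) \<longleftrightarrow> (\<forall>p\<in>Q0 - I. le (f p) (f q) \<longrightarrow> f p = f q)"
      unfolding QI by auto
    also have "\<dots> \<longleftrightarrow> (\<forall>p\<in>Q0 - I. le0 p q \<longrightarrow> p = q)"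
    proof -
      have le_iff: "\<And>p. p \<in> Q0 \<Longrightarrow> le (f p) (f q) \<longleftrightarrow> le0 p q" using assms(2,4) by blast
      have eq_iff: "\<And>p. p \<in> Q0 \<Longrightarrow> f p = f q \<longleftrightarrow> p = q" using inj assms(4) by (auto simp: inj_on_def)
      show ?thesis using le_iff eq_iff by blast
    qed
    finally show ?thesis .
  qed
  have fq: "f q \<in> Q" using assms(1,4) bij_betwE by blast
  show "toggle_plus Q le (f q) (f ` I) = toggle_plus Q0 le0 q I"
    unfolding toggle_plus_def mem mn using fq assms(4) by simp
qed

lemma cert_transfer:
  assumes "poset_iso Q0 le0 Q le" "cert Q0 le0 c C"
  shows "\<exists>c'. cert Q le c' C"
proof -
  obtain f where f: "bij_betw f Q0 Q" "\<forall>x\<in>Q0. \<forall>y\<in>Q0. le0 x y \<longleftrightarrow> le (f x) (f y)"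
    using assms by (auto simp: poset_iso_def)
  let ?g = "inv_into Q0 f"
  have inj: "inj_on f Q0" using f(1) by (simp add: bij_betw_def)
  have img: "f ` Q0 = Q" using f(1) by (simp add: bij_betw_def)
  have "cert Q le (c \<circ> ?g) C" unfolding cert_def
  proof
    fix I' assume I'J: "I' \<in> JJ Q le"
    have "I' \<in> image f ` JJ Q0 le0" using J_iso(1)[OF f] I'J by (simp add: bij_betw_def)
    then obtain I where I: "I \<in> JJ Q0 le0" "I' = f ` I" by blast
    have "(\<Sum>q\<in>Q. (1 + (c \<circ> ?g) q) * toggle_minus Q le q I' - (c \<circ> ?g) q * toggle_plus Q le q I')
        = (\<Sum>q\<in>Q0. (1 + (c \<circ> ?g) (f q)) * toggle_minus Q le (f q) I' - (c \<circ> ?g) (f q) * toggle_plus Q le (f q) I')"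
      unfolding img[symmetric] by (rule sum.reindex[OF inj, unfolded comp_def])
    also have "\<dots> = (\<Sum>q\<in>Q0. (1 + c q) * toggle_minus Q0 le0 q I - c q * toggle_plus Q0 le0 q I)"
      by (rule sum.cong) (auto simp: I(2) toggle_transfer[OF f I(1)] inv_into_f_f[OF inj])
    also have "\<dots> = C" using assms(2) I(1) by (simp add: cert_def)
    finally show "(\<Sum>q\<in>Q. (1 + (c \<circ> ?g) q) * toggle_minus Q le q I' - (c \<circ> ?g) q * toggle_plus Q le q I') = C" .
  qed
  then show ?thesis by blast
qed


lemma union_ideal: "I1 \<in> JJ Q le \<Longrightarrow> I2 \<in> JJ Q le \<Longrightarrow> I1 \<union> I2 \<in> JJ Q le"
  unfolding order_ideals_def by blast
lemma inter_ideal: "I1 \<in> JJ Q le \<Longrightarrow> I2 \<in> JJ Q le \<Longrightarrow> I1 \<inter> I2 \<in> JJ Q le"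
  unfolding order_ideals_def by blast

lemma po_subseteq: "po A (\<subseteq>)"
  unfolding partial_order_on'_def by blast

lemma lattice_from_iso:
  assumes "poset_iso P le (JJ Q0 le0) (\<subseteq>)"
  shows "distributive_lattice_on P le"
proof -
  let ?J = "JJ Q0 le0"
  obtain f where f: "bij_betw f P ?J" "\<forall>x\<in>P. \<forall>y\<in>P. le x y \<longleftrightarrow> f x \<subseteq> f y"
    using assms by (auto simp: poset_iso_def)
  have fJ: "\<And>x. x \<in> P \<Longrightarrow> f x \<in> ?J" using bij_betwE[OF f(1)] by blast
  have inj: "\<And>x y. x \<in> P \<Longrightarrow> y \<in> P \<Longrightarrow> f x = f y \<Longrightarrow> x = y"
    using f(1) by (auto simp: bij_betw_def inj_on_def)
  have surj: "\<And>A. A \<in> ?J \<Longrightarrow> \<exists>s\<in>P. f s = A"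
    using f(1) unfolding bij_betw_def by (metis image_iff)
  have po: "po P le" using iso_po[OF assms po_subseteq] .
  have join: "pjoin P le x y \<in> P \<and> f (pjoin P le x y) = f x \<union> f y" if xy: "x \<in> P" "y \<in> P" for x y
  proof -
    obtain s where s: "s \<in> P" "f s = f x \<union> f y" using surj union_ideal fJ xy by metis
    have lub: "is_lub P le x y s" unfolding is_lub_def
    proof (intro conjI ballI impI)
      show "s \<in> P" by fact
      show "le x s" using f(2) xy s by auto
      show "le y s" using f(2) xy s by auto
      fix u assume "u \<in> P" "le x u \<and> le y u"
      then have "f x \<subseteq> f u" "f y \<subseteq> f u" using f(2) xy by auto
      then show "le s u" using f(2) s \<open>u \<in> P\<close> by auto
    qed
    have uniq: "s' = s" if "is_lub P le x y s'" for s'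
    proof -
      have "s' \<in> P" "le s s'" "le s' s" using that lub unfolding is_lub_def by auto
      then show ?thesis using po_antisym[OF po] s(1) by blast
    qed
    have "pjoin P le x y = s" unfolding pjoin_def using lub uniq by (rule the_equality)
    then show ?thesis using s by simp
  qed
  have meet: "pmeet P le x y \<in> P \<and> f (pmeet P le x y) = f x \<inter> f y" if xy: "x \<in> P" "y \<in> P" for x y
  proof -
    obtain s where s: "s \<in> P" "f s = f x \<inter> f y" using surj inter_ideal fJ xy by metis
    have glb: "is_glb P le x y s" unfolding is_glb_def
    proof (intro conjI ballI impI)
      show "s \<in> P" by fact
      show "le s x" using f(2) xy s by auto
      show "le s y" using f(2) xy s by auto
      fix u assume "u \<in> P" "le u x \<and> le u y"
      then have "f u \<subseteq> f x" "f u \<subseteq> f y" using f(2) xy by auto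
      then show "le u s" using f(2) s \<open>u \<in> P\<close> by auto
    qed
    have uniq: "s' = s" if "is_glb P le x y s'" for s'
    proof -
      have "s' \<in> P" "le s s'" "le s' s" using that glb unfolding is_glb_def by auto
      then show ?thesis using po_antisym[OF po] s(1) by blast
    qed
    have "pmeet P le x y = s" unfolding pmeet_def using glb uniq by (rule the_equality)
    then show ?thesis using s by simp
  qed
  have lat: "lattice_on P le"
    unfolding lattice_on_def
  proof (intro conjI ballI)
    show "po P le" by fact
    fix x y assume "x \<in> P" "y \<in> P"
    then show "\<exists>s. is_lub P le x y s"
      using join[of x y] f(2) unfolding is_lub_def by auto
    show "\<exists>m. is_glb P le x y m"
      using meet[of x y] f(2) \<open>x \<in> P\<close> \<open>y \<in> P\<close> unfolding is_glb_def by auto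
  qed
  show ?thesis unfolding distributive_lattice_on_def
  proof (intro conjI ballI)
    show "lattice_on P le" by fact
    fix x y z assume xyz: "x \<in> P" "y \<in> P" "z \<in> P"
    have j1: "pjoin P le y z \<in> P" "f (pjoin P le y z) = f y \<union> f z" using join xyz by auto
    have l1: "pmeet P le x (pjoin P le y z) \<in> P" "f (pmeet P le x (pjoin P le y z)) = f x \<inter> (f y \<union> f z)"
      using meet[OF xyz(1) j1(1)] j1 by auto
    have m1: "pmeet P le x y \<in> P" "f (pmeet P le x y) = f x \<inter> f y" using meet xyz by auto
    have m2: "pmeet P le x z \<in> P" "f (pmeet P le x z) = f x \<inter> f z" using meet xyz by auto
    have r1: "pjoin P le (pmeet P le x y) (pmeet P le x z) \<in> P"
       "f (pjoin P le (pmeet P le x y) (pmeet P le x z)) = (f x \<inter> f y) \<union> (f x \<inter> f z)"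
      using join[OF m1(1) m2(1)] m1 m2 by auto
    show "pmeet P le x (pjoin P le y z) = pjoin P le (pmeet P le x y) (pmeet P le x z)"
      using inj[OF l1(1) r1(1)] l1(2) r1(2) by blast
  qed
qed

definition pr :: "'a set \<Rightarrow> ('a \<Rightarrow> 'a \<Rightarrow> bool) \<Rightarrow> 'a \<Rightarrow> 'a set" where
  "pr Q le q = {p\<in>Q. le p q}"

lemma pr_ideal: "po Q le \<Longrightarrow> q \<in> Q \<Longrightarrow> pr Q le q \<in> JJ Q le"
  unfolding pr_def order_ideals_def partial_order_on'_def by blast

lemma pr_le: "po Q le \<Longrightarrow> x \<in> Q \<Longrightarrow> y \<in> Q \<Longrightarrow> pr Q le x \<subseteq> pr Q le y \<longleftrightarrow> le x y"
  unfolding pr_def partial_order_on'_def by blast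

lemma pr_inj: "po Q le \<Longrightarrow> x \<in> Q \<Longrightarrow> y \<in> Q \<Longrightarrow> pr Q le x = pr Q le y \<Longrightarrow> x = y"
  using pr_le[of Q le x y] pr_le[of Q le y x] po_antisym[of Q le x y] by blast

lemma maxs_pr: "po Q le \<Longrightarrow> q \<in> Q \<Longrightarrow> maxs le (pr Q le q) = {q}"
  unfolding maxs_def pr_def partial_order_on'_def by blast

lemma principal_iff:
  assumes "finite Q" "po Q le" "I \<in> JJ Q le"
  shows "card (maxs le I) = 1 \<longleftrightarrow> (\<exists>q\<in>Q. I = pr Q le q)"
proof
  assume "\<exists>q\<in>Q. I = pr Q le q"
  then show "card (maxs le I) = 1" using maxs_pr[OF assms(2)] by auto
next
  assume "card (maxs le I) = 1"
  then obtain q where q: "maxs le I = {q}" by (rule card_1_singletonE)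
  have IQ: "I \<subseteq> Q" using ideal_sub[OF assms(3)] .
  have qI: "q \<in> I" using q unfolding maxs_def by blast
  have "I = pr Q le q"
  proof
    show "pr Q le q \<subseteq> I" using ideal_down[OF assms(3) qI] unfolding pr_def by blast
    show "I \<subseteq> pr Q le q"
    proof
      fix p assume pI: "p \<in> I"
      let ?S = "{x\<in>I. le p x}"
      have "finite ?S" using finite_subset[OF _ assms(1)] IQ by auto
      moreover have "?S \<noteq> {}" using pI po_refl[OF assms(2)] IQ by auto
      ultimately obtain m where m: "m \<in> ?S" "\<forall>z\<in>?S. le m z \<longrightarrow> z = m"
        using exists_maximal[of ?S Q le] IQ assms(2) by blast
      have "m \<in> maxs le I"
      proof -
        have "z = m" if "z \<in> I" "le m z" for z
        proof -
          have "le p z" using po_trans[OF assms(2), of p m z] m that IQ pI by auto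
          then show ?thesis using m that by auto
        qed
        then show ?thesis using m unfolding maxs_def by blast
      qed
      then have "m = q" using q by auto
      then show "p \<in> pr Q le q" using m pI IQ unfolding pr_def by auto
    qed
  qed
  then show "\<exists>q\<in>Q. I = pr Q le q" using qI IQ by auto
qed

lemma lcov_iso:
  assumes h: "bij_betw h (JJ Q le) (JJ Q' le')" "\<forall>x\<in>JJ Q le. \<forall>y\<in>JJ Q le. x \<subseteq> y \<longleftrightarrow> h x \<subseteq> h y"
    and I: "I \<in> JJ Q le"
  shows "lcov Q' le' (h I) = h ` lcov Q le I"
proof -
  let ?J = "JJ Q le" and ?J' = "JJ Q' le'"
  have hJ: "\<And>x. x \<in> ?J \<Longrightarrow> h x \<in> ?J'" using bij_betwE[OF h(1)] by blast
  have inj: "\<And>x y. x \<in> ?J \<Longrightarrow> y \<in> ?J \<Longrightarrow> h x = h y \<Longrightarrow> x = y"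
    using h(1) by (auto simp: bij_betw_def inj_on_def)
  have surj: "\<And>A. A \<in> ?J' \<Longrightarrow> \<exists>s\<in>?J. h s = A"
    using h(1) unfolding bij_betw_def by (metis image_iff)
  have lt: "x \<subset> y \<longleftrightarrow> h x \<subset> h y" if "x \<in> ?J" "y \<in> ?J" for x y
    using h(2) that inj by (metis psubset_eq)
  show ?thesis
  proof
    show "lcov Q' le' (h I) \<subseteq> h ` lcov Q le I"
    proof
      fix A assume A: "A \<in> lcov Q' le' (h I)"
      then have AJ: "A \<in> ?J'" unfolding lcov_def by blast
      obtain B where B: "B \<in> ?J" "h B = A" using surj[OF AJ] by blast
      have "B \<subset> I" using A B lt[OF B(1) I] unfolding lcov_def by blast
      moreover have "\<not> (\<exists>K\<in>?J. B \<subset> K \<and> K \<subset> I)"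
      proof
        assume "\<exists>K\<in>?J. B \<subset> K \<and> K \<subset> I"
        then obtain K where K: "K \<in> ?J" "B \<subset> K" "K \<subset> I" by blast
        then have "h K \<in> ?J'" "A \<subset> h K" "h K \<subset> h I" using hJ lt B I by auto
        then show False using A unfolding lcov_def by blast
      qed
      ultimately have "B \<in> lcov Q le I" using B(1) unfolding lcov_def by blast
      then show "A \<in> h ` lcov Q le I" using B by blast
    qed
    show "h ` lcov Q le I \<subseteq> lcov Q' le' (h I)"
    proof
      fix A assume "A \<in> h ` lcov Q le I"
      then obtain B where B: "B \<in> lcov Q le I" "A = h B" by blast
      have BJ: "B \<in> ?J" "B \<subset> I" using B unfolding lcov_def by auto
      have "A \<in> ?J'" "A \<subset> h I" using hJ BJ lt I B by auto
      moreover have "\<not> (\<exists>K\<in>?J'. A \<subset> K \<and> K \<subset> h I)"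
      proof
        assume "\<exists>K\<in>?J'. A \<subset> K \<and> K \<subset> h I"
        then obtain K where K: "K \<in> ?J'" "A \<subset> K" "K \<subset> h I" by blast
        obtain K0 where K0: "K0 \<in> ?J" "h K0 = K" using surj[OF K(1)] by blast
        have "B \<subset> K0" "K0 \<subset> I" using K K0 lt BJ I B by auto
        then show False using B K0 unfolding lcov_def by blast
      qed
      ultimately show "A \<in> lcov Q' le' (h I)" unfolding lcov_def by blast
    qed
  qed
qed


lemma birkhoff:
  assumes "finite Q" "po Q le" "finite Q'" "po Q' le'"
    and "poset_iso (JJ Q le) (\<subseteq>) (JJ Q' le') (\<subseteq>)"
  shows "poset_iso Q le Q' le'"
proof -
  let ?J = "JJ Q le" and ?J' = "JJ Q' le'"
  obtain h where h: "bij_betw h ?J ?J'" "\<forall>x\<in>?J. \<forall>y\<in>?J. x \<subseteq> y \<longleftrightarrow> h x \<subseteq> h y"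
    using assms(5) by (auto simp: poset_iso_def)
  have hJ: "\<And>x. x \<in> ?J \<Longrightarrow> h x \<in> ?J'" using bij_betwE[OF h(1)] by blast
  have surj: "\<And>A. A \<in> ?J' \<Longrightarrow> \<exists>s\<in>?J. h s = A"
    using h(1) unfolding bij_betw_def by (metis image_iff)
  have injh: "inj_on h ?J" using h(1) by (simp add: bij_betw_def)
  have cardeq: "card (maxs le' (h I)) = card (maxs le I)" if "I \<in> ?J" for I
  proof -
    have "card (maxs le' (h I)) = card (lcov Q' le' (h I))"
      using card_lcov[OF assms(3,4) hJ[OF that]] by simp
    also have "\<dots> = card (h ` lcov Q le I)" using lcov_iso[OF h that] by simp
    also have "\<dots> = card (lcov Q le I)"
    proof (rule card_image)
      show "inj_on h (lcov Q le I)" using injh by (rule inj_on_subset) (auto simp: lcov_def)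
    qed
    also have "\<dots> = card (maxs le I)" using card_lcov[OF assms(1,2) that] .
    finally show ?thesis .
  qed
  have ex: "\<exists>q'\<in>Q'. h (pr Q le q) = pr Q' le' q'" if "q \<in> Q" for q
  proof -
    have pJ: "pr Q le q \<in> ?J" using pr_ideal[OF assms(2) that] .
    have "card (maxs le (pr Q le q)) = 1" using maxs_pr[OF assms(2) that] by simp
    then have "card (maxs le' (h (pr Q le q))) = 1" using cardeq[OF pJ] by simp
    then show ?thesis using principal_iff[OF assms(3,4) hJ[OF pJ]] by blast
  qed
  define phi where "phi q = (SOME q'. q' \<in> Q' \<and> h (pr Q le q) = pr Q' le' q')" for q
  have phi: "phi q \<in> Q'" "h (pr Q le q) = pr Q' le' (phi q)" if "q \<in> Q" for q
    using someI_ex[OF ex[OF that, unfolded Bex_def]] unfolding phi_def by auto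
  have ord: "le x y \<longleftrightarrow> le' (phi x) (phi y)" if "x \<in> Q" "y \<in> Q" for x y
  proof -
    have "le x y \<longleftrightarrow> pr Q le x \<subseteq> pr Q le y" using pr_le[OF assms(2) that] by simp
    also have "\<dots> \<longleftrightarrow> h (pr Q le x) \<subseteq> h (pr Q le y)"
      using h(2) pr_ideal[OF assms(2)] that by blast
    also have "\<dots> \<longleftrightarrow> pr Q' le' (phi x) \<subseteq> pr Q' le' (phi y)" using phi that by simp
    also have "\<dots> \<longleftrightarrow> le' (phi x) (phi y)" using pr_le[OF assms(4)] phi that by blast
    finally show ?thesis .
  qed
  have inj: "inj_on phi Q"
  proof (rule inj_onI)
    fix x y assume xy: "x \<in> Q" "y \<in> Q" "phi x = phi y"
    have "le' (phi x) (phi y)" "le' (phi y) (phi x)" using po_refl[OF assms(4)] phi xy by auto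
    then have "le x y" "le y x" using ord xy by auto
    then show "x = y" using po_antisym[OF assms(2)] xy by blast
  qed
  have img: "phi ` Q = Q'"
  proof
    show "phi ` Q \<subseteq> Q'" using phi by auto
    show "Q' \<subseteq> phi ` Q"
    proof
      fix q' assume q': "q' \<in> Q'"
      have pJ: "pr Q' le' q' \<in> ?J'" using pr_ideal[OF assms(4) q'] .
      obtain I where I: "I \<in> ?J" "h I = pr Q' le' q'" using surj[OF pJ] by blast
      have "card (maxs le I) = 1" using cardeq[OF I(1)] I(2) maxs_pr[OF assms(4) q'] by simp
      then obtain q where q: "q \<in> Q" "I = pr Q le q" using principal_iff[OF assms(1,2) I(1)] by blast
      have "pr Q' le' (phi q) = pr Q' le' q'" using phi[OF q(1)] I q by simp
      then have "phi q = q'" using pr_inj[OF assms(4) phi(1)[OF q(1)] q'] by simp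
      then show "q' \<in> phi ` Q" using q by auto
    qed
  qed
  have "bij_betw phi Q Q'" using inj img by (simp add: bij_betw_def)
  then show ?thesis unfolding poset_iso_def using ord by blast
qed

lemma transplant:
  fixes P :: "'a set"
  assumes "finite Q0" "po Q0 le0" "poset_iso P le (JJ Q0 le0) (\<subseteq>)"
  shows "\<exists>(Q :: 'a set) leQ. poset_iso Q0 le0 Q leQ"
proof -
  obtain f where f: "bij_betw f P (JJ Q0 le0)"
    using assms(3) by (auto simp: poset_iso_def)
  define e where "e q = inv_into P f (pr Q0 le0 q)" for q
  have inje: "inj_on e Q0"
  proof (rule inj_onI)
    fix x y assume xy: "x \<in> Q0" "y \<in> Q0" "e x = e y"
    have "pr Q0 le0 x \<in> f ` P" "pr Q0 le0 y \<in> f ` P"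
      using pr_ideal[OF assms(2)] xy f(1) by (auto simp: bij_betw_def)
    then have "pr Q0 le0 x = pr Q0 le0 y" using xy(3) unfolding e_def by (metis f_inv_into_f)
    then show "x = y" using pr_inj[OF assms(2)] xy by blast
  qed
  define leQ where "leQ a b = le0 (inv_into Q0 e a) (inv_into Q0 e b)" for a b
  have "bij_betw e Q0 (e ` Q0)" using inje by (simp add: bij_betw_def)
  moreover have "\<forall>x\<in>Q0. \<forall>y\<in>Q0. le0 x y \<longleftrightarrow> leQ (e x) (e y)"
    unfolding leQ_def using inv_into_f_f[OF inje] by simp
  ultimately have "poset_iso Q0 le0 (e ` Q0) leQ" unfolding poset_iso_def by blast
  then show ?thesis by blast
qed

lemma main_red:
  fixes P :: "'a set" and le :: "'a \<Rightarrow> 'a \<Rightarrow> bool" and Q0 :: "'c set"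
  assumes "finite Q0" "po Q0 le0" "cert Q0 le0 c C" "poset_iso P le (JJ Q0 le0) (\<subseteq>)"
  shows "distributive_lattice_on P le \<and>
    (\<exists>(Q :: 'a set) leQ. finite_poset Q leQ \<and>
       poset_iso P le (order_ideals Q leQ) (\<subseteq>) \<and>
       (\<forall>(Q' :: 'b set) leQ'. finite_poset Q' leQ' \<and>
          poset_iso P le (order_ideals Q' leQ') (\<subseteq>) \<longrightarrow> poset_iso Q leQ Q' leQ') \<and>
       tCDE Q leQ)"
proof -
  have D: "distributive_lattice_on P le" using lattice_from_iso[OF assms(4)] .
  obtain Q :: "'a set" and leQ where iso: "poset_iso Q0 le0 Q leQ"
    using transplant[OF assms(1,2,4)] by blast
  have isoS: "poset_iso Q leQ Q0 le0" using iso_sym[OF iso] .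
  have finQ: "finite Q" using iso_finite[OF isoS assms(1)] .
  have poQ: "po Q leQ" using iso_po[OF isoS assms(2)] .
  have PJ: "poset_iso P le (JJ Q leQ) (\<subseteq>)" using iso_trans[OF assms(4) J_poset_iso[OF iso]] .
  obtain c' where c': "cert Q leQ c' C" using cert_transfer[OF iso assms(3)] by blast
  have T: "tCDE Q leQ" using cert_tCDE[OF finQ poQ c'] .
  have U: "poset_iso Q leQ Q' leQ'"
    if "finite_poset Q' leQ'" "poset_iso P le (order_ideals Q' leQ') (\<subseteq>)" for Q' :: "'b set" and leQ'
  proof -
    have "poset_iso (JJ Q leQ) (\<subseteq>) (JJ Q' leQ') (\<subseteq>)"
      using iso_trans[OF iso_sym[OF PJ] that(2)] .
    then show ?thesis using birkhoff[OF finQ poQ] that(1) unfolding finite_poset_def by blast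
  qed
  show ?thesis using D finQ poQ PJ U T unfolding finite_poset_def by blast
qed


lemma prefix_set:
  fixes S :: "nat set" and n :: nat
  assumes "S \<subseteq> {1..<n}" "\<forall>i\<in>S. \<forall>k. 1 \<le> k \<and> k \<le> i \<longrightarrow> k \<in> S" "1 \<le> n"
  shows "\<exists>s. 1 \<le> s \<and> s \<le> n \<and> S = {k. 1 \<le> k \<and> k < s}"
proof (cases "S = {}")
  case True then show ?thesis using assms(3) by (intro exI[of _ 1]) auto
next
  case False
  have fin: "finite S" using assms(1) finite_subset by blast
  let ?m = "Max S"
  have mS: "?m \<in> S" using Max_in[OF fin False] .
  have "S = {k. 1 \<le> k \<and> k < ?m + 1}"
  proof
    show "S \<subseteq> {k. 1 \<le> k \<and> k < ?m + 1}" using Max_ge[OF fin] assms(1) by fastforce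
    show "{k. 1 \<le> k \<and> k < ?m + 1} \<subseteq> S" using assms(2) mS by auto
  qed
  moreover have "1 \<le> ?m + 1" "?m + 1 \<le> n" using mS assms(1) by auto
  ultimately show ?thesis by blast
qed

lemma chain_sum:
  assumes "1 \<le> s" "s \<le> n"
  shows "(\<Sum>i\<in>{1..<n}. (1 + (real i - real n) / real n) * (if i + 1 = s then 1 else 0)
           - (real i - real n) / real n * (if i = s then 1 else 0)) = (real n - 1) / real n"
proof -
  let ?c = "\<lambda>i::nat. (real i - real n) / real n"
  have "(\<Sum>i\<in>{1..<n}. (1 + ?c i) * (if i + 1 = s then 1 else 0) - ?c i * (if i = s then 1 else 0))
      = (\<Sum>i\<in>{1..<n}. (if i = s - 1 then 1 + ?c i else 0)) - (\<Sum>i\<in>{1..<n}. (if i = s then ?c i else 0))"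
    unfolding sum_subtractf[symmetric]
    by (rule sum.cong) (use assms in auto)
  also have "\<dots> = (if s - 1 \<in> {1..<n} then 1 + ?c (s - 1) else 0) - (if s \<in> {1..<n} then ?c s else 0)"
    by (simp only: sum.delta[OF finite_atLeastLessThan])
  also have "\<dots> = (real n - 1) / real n"
  proof -
    have n0: "real n > 0" using assms by simp
    consider "s = 1" | "1 < s" "s < n" | "1 < s" "s = n" using assms by linarith
    then show ?thesis
    proof cases
      case 1 then show ?thesis using n0 by (auto simp: field_simps)
    next
      case 2
      then have "real (s - 1) = real s - 1" by simp
      then show ?thesis using 2 n0 by (auto simp: field_simps)
    next
      case 3
      then have "real (s - 1) = real s - 1" by simp
      then show ?thesis using 3 n0 by (auto simp: field_simps)
    qed
  qed
  finally show ?thesis .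
qed

definition QA :: "nat \<Rightarrow> nat \<Rightarrow> (nat \<times> nat) set" where
  "QA a b = (\<lambda>i. (i, 0)) ` {1..<a} \<union> (\<lambda>j. (0, j)) ` {1..<b}"

definition fA :: "nat \<Rightarrow> nat \<Rightarrow> (nat \<times> nat) set" where
  "fA s t = (\<lambda>i. (i, 0)) ` {1..<s} \<union> (\<lambda>j. (0, j)) ` {1..<t}"

lemma po_prod_le: "po A prod_le"
  unfolding partial_order_on'_def prod_le_def by (auto simp: prod_eq_iff)

lemma fA_ideal:
  assumes "1 \<le> s" "s \<le> a" "1 \<le> t" "t \<le> b"
  shows "fA s t \<in> JJ (QA a b) prod_le"
  unfolding order_ideals_def fA_def QA_def prod_le_def using assms by auto

lemma ideal_fA:
  assumes "I \<in> JJ (QA a b) prod_le" "1 \<le> a" "1 \<le> b"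
  shows "\<exists>s t. 1 \<le> s \<and> s \<le> a \<and> 1 \<le> t \<and> t \<le> b \<and> I = fA s t"
proof -
  have IQ: "I \<subseteq> QA a b" using ideal_sub[OF assms(1)] .
  let ?S1 = "{i. (i, 0) \<in> I}" and ?S2 = "{j. (0, j) \<in> I}"
  have s1: "?S1 \<subseteq> {1..<a}" using IQ unfolding QA_def by auto
  have s2: "?S2 \<subseteq> {1..<b}" using IQ unfolding QA_def by auto
  have d1: "\<forall>i\<in>?S1. \<forall>k. 1 \<le> k \<and> k \<le> i \<longrightarrow> k \<in> ?S1"
  proof (intro ballI allI impI)
    fix i k assume "i \<in> ?S1" "1 \<le> k \<and> k \<le> i"
    moreover have "(k, 0) \<in> QA a b" using calculation s1 unfolding QA_def by auto
    ultimately show "k \<in> ?S1" using ideal_down[OF assms(1), of "(i,0)" "(k,0)"] by (auto simp: prod_le_def)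
  qed
  have d2: "\<forall>i\<in>?S2. \<forall>k. 1 \<le> k \<and> k \<le> i \<longrightarrow> k \<in> ?S2"
  proof (intro ballI allI impI)
    fix i k assume "i \<in> ?S2" "1 \<le> k \<and> k \<le> i"
    moreover have "(0, k) \<in> QA a b" using calculation s2 unfolding QA_def by auto
    ultimately show "k \<in> ?S2" using ideal_down[OF assms(1), of "(0,i)" "(0,k)"] by (auto simp: prod_le_def)
  qed
  obtain s where s: "1 \<le> s" "s \<le> a" "?S1 = {k. 1 \<le> k \<and> k < s}" using prefix_set[OF s1 d1 assms(2)] by blast
  obtain t where t: "1 \<le> t" "t \<le> b" "?S2 = {k. 1 \<le> k \<and> k < t}" using prefix_set[OF s2 d2 assms(3)] by blast
  have "I = fA s t"
  proof
    show "I \<subseteq> fA s t"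
    proof
      fix x assume xI: "x \<in> I"
      then have "x \<in> QA a b" using IQ by auto
      then consider i where "x = (i, 0)" | j where "x = (0, j)" unfolding QA_def by auto
      then show "x \<in> fA s t"
      proof cases
        case 1 then have "i \<in> ?S1" using xI by auto
        then show ?thesis using 1 s(3) unfolding fA_def by auto
      next
        case 2 then have "j \<in> ?S2" using xI by auto
        then show ?thesis using 2 t(3) unfolding fA_def by auto
      qed
    qed
    show "fA s t \<subseteq> I"
    proof
      fix x assume "x \<in> fA s t"
      then consider i where "x = (i, 0)" "1 \<le> i" "i < s" | j where "x = (0, j)" "1 \<le> j" "j < t"
        unfolding fA_def by auto
      then show "x \<in> I"
      proof cases
        case 1 then have "i \<in> ?S1" using s(3) by auto
        then show ?thesis using 1 by auto
      next
        case 2 then have "j \<in> ?S2" using t(3) by auto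
        then show ?thesis using 2 by auto
      qed
    qed
  qed
  then show ?thesis using s t by blast
qed

lemma fA_order:
  assumes "1 \<le> s" "s \<le> a" "1 \<le> t" "t \<le> b" "1 \<le> s'" "s' \<le> a" "1 \<le> t'" "t' \<le> b"
  shows "prod_le (s, t) (s', t') \<longleftrightarrow> fA s t \<subseteq> fA s' t'"
proof
  assume "prod_le (s, t) (s', t')"
  then show "fA s t \<subseteq> fA s' t'" unfolding prod_le_def fA_def by auto
next
  assume sub: "fA s t \<subseteq> fA s' t'"
  have "s \<le> s'"
  proof (rule ccontr)
    assume "\<not> s \<le> s'"
    then have "(s - 1, 0) \<in> fA s t" using assms unfolding fA_def by auto
    moreover have "(s - 1, 0) \<notin> fA s' t'" using \<open>\<not> s \<le> s'\<close> assms unfolding fA_def by auto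
    ultimately show False using sub by auto
  qed
  moreover have "t \<le> t'"
  proof (rule ccontr)
    assume "\<not> t \<le> t'"
    then have "(0, t - 1) \<in> fA s t" using assms unfolding fA_def by auto
    moreover have "(0, t - 1) \<notin> fA s' t'" using \<open>\<not> t \<le> t'\<close> assms unfolding fA_def by auto
    ultimately show False using sub by auto
  qed
  ultimately show "prod_le (s, t) (s', t')" unfolding prod_le_def by simp
qed

lemma isoA:
  assumes "1 \<le> a" "1 \<le> b"
  shows "poset_iso (chain_prod a b) prod_le (JJ (QA a b) prod_le) (\<subseteq>)"
proof -
  let ?f = "\<lambda>p. fA (fst p) (snd p)"
  have ord: "\<forall>x\<in>chain_prod a b. \<forall>y\<in>chain_prod a b. prod_le x y \<longleftrightarrow> ?f x \<subseteq> ?f y"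
    unfolding chain_prod_def using fA_order by fastforce
  have inj: "inj_on ?f (chain_prod a b)"
  proof (rule inj_onI)
    fix x y assume xy: "x \<in> chain_prod a b" "y \<in> chain_prod a b" "?f x = ?f y"
    then have "prod_le x y" "prod_le y x" using ord by auto
    then show "x = y" using po_antisym[OF po_prod_le] xy by blast
  qed
  have img: "?f ` chain_prod a b = JJ (QA a b) prod_le"
  proof
    show "?f ` chain_prod a b \<subseteq> JJ (QA a b) prod_le"
      unfolding chain_prod_def using fA_ideal by auto
    show "JJ (QA a b) prod_le \<subseteq> ?f ` chain_prod a b"
    proof
      fix I assume "I \<in> JJ (QA a b) prod_le"
      then obtain s t where st: "1 \<le> s" "s \<le> a" "1 \<le> t" "t \<le> b" "I = fA s t"
        using ideal_fA assms by blast
      then have "(s, t) \<in> chain_prod a b" unfolding chain_prod_def by auto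
      then show "I \<in> ?f ` chain_prod a b" using st by force
    qed
  qed
  show ?thesis unfolding poset_iso_def bij_betw_def using inj img ord by blast
qed

lemma togA1:
  assumes "1 \<le> s" "s \<le> a" "1 \<le> t" "t \<le> b" "1 \<le> i" "i < a"
  shows "toggle_minus (QA a b) prod_le (i, 0) (fA s t) = (if i + 1 = s then 1 else 0)"
    and "toggle_plus (QA a b) prod_le (i, 0) (fA s t) = (if i = s then 1 else 0)"
proof -
  have mem: "(i, 0) \<in> fA s t \<longleftrightarrow> i < s" using assms unfolding fA_def by auto
  have inQ: "(i, 0) \<in> QA a b" using assms unfolding QA_def by auto
  show "toggle_minus (QA a b) prod_le (i, 0) (fA s t) = (if i + 1 = s then 1 else 0)"
  proof (cases "i + 1 = s")
    case True
    have "\<forall>p\<in>fA s t. prod_le (i, 0) p \<longrightarrow> p = (i, 0)"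
      using True assms unfolding fA_def prod_le_def by auto
    then show ?thesis using True mem unfolding toggle_minus_def by auto
  next
    case False
    show ?thesis
    proof (cases "i < s")
      case True
      then have "(i + 1, 0) \<in> fA s t" using False assms unfolding fA_def by auto
      moreover have "prod_le (i, 0) (i + 1, 0)" unfolding prod_le_def by auto
      ultimately have "\<not> (\<forall>p\<in>fA s t. prod_le (i, 0) p \<longrightarrow> p = (i, 0))" by auto
      then show ?thesis using False unfolding toggle_minus_def by auto
    next
      case False
      then show ?thesis using mem \<open>i + 1 \<noteq> s\<close> unfolding toggle_minus_def by auto
    qed
  qed
  show "toggle_plus (QA a b) prod_le (i, 0) (fA s t) = (if i = s then 1 else 0)"
  proof (cases "i = s")
    case True
    have "\<forall>p\<in>QA a b - fA s t. prod_le p (i, 0) \<longrightarrow> p = (i, 0)"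
      using True assms unfolding QA_def fA_def prod_le_def by auto
    then show ?thesis using True mem inQ unfolding toggle_plus_def by auto
  next
    case False
    show ?thesis
    proof (cases "s < i")
      case True
      then have "(s, 0) \<in> QA a b - fA s t" using assms unfolding QA_def fA_def by auto
      moreover have "prod_le (s, 0) (i, 0)" using True unfolding prod_le_def by auto
      ultimately have "\<not> (\<forall>p\<in>QA a b - fA s t. prod_le p (i, 0) \<longrightarrow> p = (i, 0))" using True by auto
      then show ?thesis using False unfolding toggle_plus_def by auto
    next
      case False
      then show ?thesis using mem \<open>i \<noteq> s\<close> unfolding toggle_plus_def by auto
    qed
  qed
qed

lemma togA2:
  assumes "1 \<le> s" "s \<le> a" "1 \<le> t" "t \<le> b" "1 \<le> j" "j < b"
  shows "toggle_minus (QA a b) prod_le (0, j) (fA s t) = (if j + 1 = t then 1 else 0)"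
    and "toggle_plus (QA a b) prod_le (0, j) (fA s t) = (if j = t then 1 else 0)"
proof -
  have mem: "(0, j) \<in> fA s t \<longleftrightarrow> j < t" using assms unfolding fA_def by auto
  have inQ: "(0, j) \<in> QA a b" using assms unfolding QA_def by auto
  show "toggle_minus (QA a b) prod_le (0, j) (fA s t) = (if j + 1 = t then 1 else 0)"
  proof (cases "j + 1 = t")
    case True
    have "\<forall>p\<in>fA s t. prod_le (0, j) p \<longrightarrow> p = (0, j)"
      using True assms unfolding fA_def prod_le_def by auto
    then show ?thesis using True mem unfolding toggle_minus_def by auto
  next
    case False
    show ?thesis
    proof (cases "j < t")
      case True
      then have "(0, j + 1) \<in> fA s t" using False assms unfolding fA_def by auto
      moreover have "prod_le (0, j) (0, j + 1)" unfolding prod_le_def by auto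
      ultimately have "\<not> (\<forall>p\<in>fA s t. prod_le (0, j) p \<longrightarrow> p = (0, j))" by auto
      then show ?thesis using False unfolding toggle_minus_def by auto
    next
      case False
      then show ?thesis using mem \<open>j + 1 \<noteq> t\<close> unfolding toggle_minus_def by auto
    qed
  qed
  show "toggle_plus (QA a b) prod_le (0, j) (fA s t) = (if j = t then 1 else 0)"
  proof (cases "j = t")
    case True
    have "\<forall>p\<in>QA a b - fA s t. prod_le p (0, j) \<longrightarrow> p = (0, j)"
      using True assms unfolding QA_def fA_def prod_le_def by auto
    then show ?thesis using True mem inQ unfolding toggle_plus_def by auto
  next
    case False
    show ?thesis
    proof (cases "t < j")
      case True
      then have "(0, t) \<in> QA a b - fA s t" using assms unfolding QA_def fA_def by auto
      moreover have "prod_le (0, t) (0, j)" using True unfolding prod_le_def by auto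
      ultimately have "\<not> (\<forall>p\<in>QA a b - fA s t. prod_le p (0, j) \<longrightarrow> p = (0, j))" using True by auto
      then show ?thesis using False unfolding toggle_plus_def by auto
    next
      case False
      then show ?thesis using mem \<open>j \<noteq> t\<close> unfolding toggle_plus_def by auto
    qed
  qed
qed

definition cA :: "nat \<Rightarrow> nat \<Rightarrow> nat \<times> nat \<Rightarrow> real" where
  "cA a b q = (if snd q = 0 then (real (fst q) - real a) / real a else (real (snd q) - real b) / real b)"

lemma certA:
  assumes "1 \<le> a" "1 \<le> b"
  shows "cert (QA a b) prod_le (cA a b) ((real a - 1) / real a + (real b - 1) / real b)"
  unfolding cert_def
proof
  fix I assume "I \<in> JJ (QA a b) prod_le"
  then obtain s t where st: "1 \<le> s" "s \<le> a" "1 \<le> t" "t \<le> b" "I = fA s t"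
    using ideal_fA assms by blast
  let ?F = "\<lambda>q. (1 + cA a b q) * toggle_minus (QA a b) prod_le q I - cA a b q * toggle_plus (QA a b) prod_le q I"
  have inj1: "inj_on (\<lambda>i::nat. (i, 0::nat)) {1..<a}" by (rule inj_onI) auto
  have inj2: "inj_on (\<lambda>j::nat. (0::nat, j)) {1..<b}" by (rule inj_onI) auto
  have disj: "(\<lambda>i::nat. (i, 0::nat)) ` {1..<a} \<inter> (\<lambda>j. (0, j)) ` {1..<b} = {}" by auto
  have "sum ?F (QA a b) = sum ?F ((\<lambda>i. (i, 0)) ` {1..<a}) + sum ?F ((\<lambda>j. (0, j)) ` {1..<b})"
    unfolding QA_def by (rule sum.union_disjoint) (use disj in auto)
  also have "sum ?F ((\<lambda>i. (i, 0)) ` {1..<a}) = (\<Sum>i\<in>{1..<a}. ?F (i, 0))"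
    by (rule sum.reindex[OF inj1, unfolded comp_def])
  also have "\<dots> = (\<Sum>i\<in>{1..<a}. (1 + (real i - real a) / real a) * (if i + 1 = s then 1 else 0)
           - (real i - real a) / real a * (if i = s then 1 else 0))"
    by (rule sum.cong) (auto simp: st(5) togA1[OF st(1-4)] cA_def)
  also have "\<dots> = (real a - 1) / real a" using chain_sum st by simp
  also have "sum ?F ((\<lambda>j. (0, j)) ` {1..<b}) = (\<Sum>j\<in>{1..<b}. ?F (0, j))"
    by (rule sum.reindex[OF inj2, unfolded comp_def])
  also have "\<dots> = (\<Sum>j\<in>{1..<b}. (1 + (real j - real b) / real b) * (if j + 1 = t then 1 else 0)
           - (real j - real b) / real b * (if j = t then 1 else 0))"
    by (rule sum.cong) (auto simp: st(5) togA2[OF st(1-4)] cA_def)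
  also have "\<dots> = (real b - 1) / real b" using chain_sum st by simp
  finally show "sum ?F (QA a b) = (real a - 1) / real a + (real b - 1) / real b" .
qed

lemma famA:
  assumes "1 \<le> a" "1 \<le> b"
  shows "\<exists>c C. finite (QA a b) \<and> po (QA a b) prod_le \<and> cert (QA a b) prod_le c C \<and>
     poset_iso (chain_prod a b) prod_le (JJ (QA a b) prod_le) (\<subseteq>)"
  using certA[OF assms] isoA[OF assms] po_prod_le by (auto simp: QA_def)


definition fB :: "nat \<Rightarrow> nat \<Rightarrow> (nat \<times> nat) set" where
  "fB p r = (\<lambda>j. (1, j)) ` {1..p} \<union> (\<lambda>j. (2, j)) ` {1..r}"

lemma QB_eq: "chain_prod 2 b = (\<lambda>j. (1, j)) ` {1..b} \<union> (\<lambda>j. (2, j)) ` {1..b}"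
proof -
  have "{1..2::nat} = {1, 2}" by auto
  then show ?thesis unfolding chain_prod_def by auto
qed

lemma fB_ideal:
  assumes "r \<le> p" "p \<le> b"
  shows "fB p r \<in> JJ (chain_prod 2 b) prod_le"
proof -
  have "fB p r \<subseteq> chain_prod 2 b" using assms unfolding fB_def QB_eq by auto
  moreover have "y \<in> fB p r" if xy: "x \<in> fB p r" "y \<in> chain_prod 2 b" "prod_le y x" for x y
  proof -
    obtain y1 y2 where y: "y = (y1, y2)" "y1 = 1 \<or> y1 = 2" "1 \<le> y2"
      using xy(2) unfolding QB_eq by auto
    consider j where "x = (1, j)" "1 \<le> j" "j \<le> p" | j where "x = (2, j)" "1 \<le> j" "j \<le> r"
      using xy(1) unfolding fB_def by auto
    then show ?thesis
    proof cases
      case 1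
      then have "y1 = 1" "y2 \<le> p" using xy(3) y unfolding prod_le_def by auto
      then show ?thesis using y unfolding fB_def by auto
    next
      case 2
      then have "y2 \<le> r" using xy(3) y unfolding prod_le_def by auto
      then show ?thesis using y assms unfolding fB_def by auto
    qed
  qed
  ultimately show ?thesis unfolding order_ideals_def by blast
qed

lemma fB_order: "fB p r \<subseteq> fB p' r' \<longleftrightarrow> p \<le> p' \<and> r \<le> r'"
proof
  assume sub: "fB p r \<subseteq> fB p' r'"
  have "p \<le> p'"
  proof (rule ccontr)
    assume "\<not> p \<le> p'"
    then have "(1, p) \<in> fB p r" "(1, p) \<notin> fB p' r'" unfolding fB_def by auto
    then show False using sub by auto
  qed
  moreover have "r \<le> r'"
  proof (rule ccontr)
    assume "\<not> r \<le> r'"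
    then have "(2, r) \<in> fB p r" "(2, r) \<notin> fB p' r'" unfolding fB_def by auto
    then show False using sub by auto
  qed
  ultimately show "p \<le> p' \<and> r \<le> r'" by simp
next
  assume "p \<le> p' \<and> r \<le> r'"
  then show "fB p r \<subseteq> fB p' r'" unfolding fB_def by auto
qed

lemma ideal_fB:
  assumes I: "I \<in> JJ (chain_prod 2 b) prod_le"
  shows "\<exists>p r. r \<le> p \<and> p \<le> b \<and> I = fB p r"
proof -
  have IQ: "I \<subseteq> chain_prod 2 b" using ideal_sub[OF I] .
  have IQ': "\<exists>j. 1 \<le> j \<and> j \<le> b \<and> (x = (1, j) \<or> x = (2, j))" if "x \<in> I" for x
  proof -
    have "x \<in> {1..2} \<times> {1..b}" using IQ that unfolding chain_prod_def by auto
    then obtain i j where "x = (i, j)" "1 \<le> i" "i \<le> 2" "1 \<le> j" "j \<le> b" by auto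
    moreover have "i = 1 \<or> i = 2" using calculation by auto
    ultimately show ?thesis by blast
  qed
  let ?S1 = "{j. (1::nat, j) \<in> I}" and ?S2 = "{j. (2::nat, j) \<in> I}"
  have s1: "?S1 \<subseteq> {1..<b+1}"
  proof
    fix j assume "j \<in> ?S1"
    then obtain j' where "1 \<le> j'" "j' \<le> b" "(1, j) = (1, j') \<or> (1::nat, j) = (2, j')" using IQ' by blast
    then show "j \<in> {1..<b+1}" by auto
  qed
  have s2: "?S2 \<subseteq> {1..<b+1}"
  proof
    fix j assume "j \<in> ?S2"
    then obtain j' where "1 \<le> j'" "j' \<le> b" "(2::nat, j) = (1, j') \<or> (2::nat, j) = (2, j')" using IQ' by blast
    then show "j \<in> {1..<b+1}" by auto
  qed
  have d1: "\<forall>i\<in>?S1. \<forall>k. 1 \<le> k \<and> k \<le> i \<longrightarrow> k \<in> ?S1"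
  proof (intro ballI allI impI)
    fix i k assume ik: "i \<in> ?S1" "1 \<le> k \<and> k \<le> i"
    have "i \<le> b" using ik s1 by auto
    then have "(1, k) \<in> chain_prod 2 b" using ik unfolding chain_prod_def by auto
    moreover have "prod_le (1, k) (1, i)" using ik unfolding prod_le_def by auto
    ultimately have "(1, k) \<in> I" using ideal_down[OF I, of "(1,i)" "(1,k)"] ik by blast
    then show "k \<in> ?S1" by simp
  qed
  have d2: "\<forall>i\<in>?S2. \<forall>k. 1 \<le> k \<and> k \<le> i \<longrightarrow> k \<in> ?S2"
  proof (intro ballI allI impI)
    fix i k assume ik: "i \<in> ?S2" "1 \<le> k \<and> k \<le> i"
    have "i \<le> b" using ik s2 by auto
    then have "(2, k) \<in> chain_prod 2 b" using ik unfolding chain_prod_def by auto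
    moreover have "prod_le (2, k) (2, i)" using ik unfolding prod_le_def by auto
    ultimately have "(2, k) \<in> I" using ideal_down[OF I, of "(2,i)" "(2,k)"] ik by blast
    then show "k \<in> ?S2" by simp
  qed
  have b1: "1 \<le> b + 1" by simp
  obtain s where s: "1 \<le> s" "s \<le> b + 1" "?S1 = {k. 1 \<le> k \<and> k < s}" using prefix_set[OF s1 d1 b1] by blast
  obtain t where t: "1 \<le> t" "t \<le> b + 1" "?S2 = {k. 1 \<le> k \<and> k < t}" using prefix_set[OF s2 d2 b1] by blast
  have S1i: "(1, k) \<in> I \<longleftrightarrow> 1 \<le> k \<and> k < s" for k
  proof -
    have "k \<in> ?S1 \<longleftrightarrow> k \<in> {k. 1 \<le> k \<and> k < s}" using s(3) by (rule arg_cong)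
    then show ?thesis by simp
  qed
  have S2i: "(2, k) \<in> I \<longleftrightarrow> 1 \<le> k \<and> k < t" for k
  proof -
    have "k \<in> ?S2 \<longleftrightarrow> k \<in> {k. 1 \<le> k \<and> k < t}" using t(3) by (rule arg_cong)
    then show ?thesis by simp
  qed
  have eq: "I = fB (s - 1) (t - 1)"
  proof
    show "I \<subseteq> fB (s - 1) (t - 1)"
    proof
      fix x assume xI: "x \<in> I"
      then obtain j where j: "1 \<le> j" "j \<le> b" "x = (1, j) \<or> x = (2, j)" using IQ' by blast
      show "x \<in> fB (s - 1) (t - 1)"
      proof (cases "x = (1, j)")
        case True
        then have "j < s" using S1i xI by blast
        then have "j \<in> {1..s - 1}" using j by auto
        then show ?thesis using True unfolding fB_def by blast
      next
        case False
        then have "x = (2, j)" using j by blast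
        then have "j < t" using S2i xI by blast
        then have "j \<in> {1..t - 1}" using j by auto
        then show ?thesis using \<open>x = (2, j)\<close> unfolding fB_def by blast
      qed
    qed
    show "fB (s - 1) (t - 1) \<subseteq> I"
    proof
      fix x assume "x \<in> fB (s - 1) (t - 1)"
      then consider j where "x = (1, j)" "1 \<le> j" "j < s" | j where "x = (2, j)" "1 \<le> j" "j < t"
        unfolding fB_def by auto
      then show "x \<in> I"
      proof cases
        case 1 then show ?thesis using S1i by blast
      next
        case 2 then show ?thesis using S2i by blast
      qed
    qed
  qed
  have "t - 1 \<le> s - 1"
  proof (rule ccontr)
    assume "\<not> t - 1 \<le> s - 1"
    then have "(2, t - 1) \<in> I" "(1, t - 1) \<notin> I" "1 \<le> t - 1" using S1i S2i t(1) by auto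
    moreover have "(1, t - 1) \<in> chain_prod 2 b" using calculation t(2) unfolding chain_prod_def by auto
    moreover have "prod_le (1, t - 1) (2, t - 1)" unfolding prod_le_def by auto
    ultimately show False using ideal_down[OF I, of "(2, t - 1)" "(1, t - 1)"] by blast
  qed
  moreover have "s - 1 \<le> b" using s(2) by simp
  ultimately show ?thesis using eq by blast
qed

definition yfun :: "nat \<Rightarrow> nat \<Rightarrow> nat \<Rightarrow> nat" where
  "yfun p r = (\<lambda>k. if k = 0 then p else if k = 1 then r else 0)"

lemma young_props:
  assumes "lam \<in> young_interval b"
  shows "lam 1 \<le> lam 0" "lam 0 \<le> b" "lam = yfun (lam 0) (lam 1)"
proof -
  have am: "antimono lam" and bd: "\<And>i. lam i \<le> (if i < 2 then b else 0)"
    using assms unfolding young_interval_def by auto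
  show "lam 1 \<le> lam 0" using am unfolding antimono_def by auto
  show "lam 0 \<le> b" using bd[of 0] by simp
  show "lam = yfun (lam 0) (lam 1)"
  proof
    fix k show "lam k = yfun (lam 0) (lam 1) k"
      using bd[of k] unfolding yfun_def by (cases "k = 0 \<or> k = 1") auto
  qed
qed

lemma yfun_young: "r \<le> p \<Longrightarrow> p \<le> b \<Longrightarrow> yfun p r \<in> young_interval b"
  unfolding young_interval_def yfun_def antimono_def by auto

lemma isoB:
  shows "poset_iso (young_interval b) (\<le>) (JJ (chain_prod 2 b) prod_le) (\<subseteq>)"
proof -
  let ?g = "\<lambda>lam. fB (lam 0) (lam 1)"
  have ord: "\<forall>x\<in>young_interval b. \<forall>y\<in>young_interval b. x \<le> y \<longleftrightarrow> ?g x \<subseteq> ?g y"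
  proof (intro ballI)
    fix x y assume xy: "x \<in> young_interval b" "y \<in> young_interval b"
    have "x \<le> y \<longleftrightarrow> x 0 \<le> y 0 \<and> x 1 \<le> y 1"
    proof
      assume "x \<le> y" then show "x 0 \<le> y 0 \<and> x 1 \<le> y 1" by (simp add: le_fun_def)
    next
      assume h: "x 0 \<le> y 0 \<and> x 1 \<le> y 1"
      show "x \<le> y" unfolding le_fun_def
      proof
        fix k
        show "x k \<le> y k"
        proof -
          have "x k = yfun (x 0) (x 1) k" "y k = yfun (y 0) (y 1) k"
            using young_props(3)[OF xy(1)] young_props(3)[OF xy(2)] by metis+
          then show ?thesis using h unfolding yfun_def by auto
        qed
      qed
    qed
    then show "x \<le> y \<longleftrightarrow> ?g x \<subseteq> ?g y" using fB_order by simp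
  qed
  have inj: "inj_on ?g (young_interval b)"
  proof (rule inj_onI)
    fix x y assume xy: "x \<in> young_interval b" "y \<in> young_interval b" "?g x = ?g y"
    then have "x \<le> y" "y \<le> x" using ord by auto
    then show "x = y" by (rule order_antisym)
  qed
  have img: "?g ` young_interval b = JJ (chain_prod 2 b) prod_le"
  proof
    show "?g ` young_interval b \<subseteq> JJ (chain_prod 2 b) prod_le"
      using fB_ideal young_props by blast
    show "JJ (chain_prod 2 b) prod_le \<subseteq> ?g ` young_interval b"
    proof
      fix I assume "I \<in> JJ (chain_prod 2 b) prod_le"
      then obtain p r where pr: "r \<le> p" "p \<le> b" "I = fB p r" using ideal_fB by blast
      have "yfun p r \<in> young_interval b" using yfun_young pr by auto
      moreover have "?g (yfun p r) = I" using pr unfolding yfun_def by simp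
      ultimately show "I \<in> ?g ` young_interval b" by force
    qed
  qed
  show ?thesis unfolding poset_iso_def bij_betw_def using inj img ord by blast
qed

lemma QB_mem: "(i, j) \<in> chain_prod 2 b \<longleftrightarrow> (i = 1 \<or> i = 2) \<and> 1 \<le> j \<and> j \<le> b"
  unfolding chain_prod_def by auto

lemma fB_mem: "(i, j) \<in> fB p r \<longleftrightarrow> 1 \<le> j \<and> ((i = 1 \<and> j \<le> p) \<or> (i = 2 \<and> j \<le> r))"
  unfolding fB_def by auto

lemma togB:
  assumes rp: "r \<le> p" "p \<le> b" and j: "1 \<le> j" "j \<le> b"
  shows "toggle_minus (chain_prod 2 b) prod_le (1, j) (fB p r) = (if j = p \<and> r < p then 1 else 0)"
    and "toggle_plus (chain_prod 2 b) prod_le (1, j) (fB p r) = (if j = p + 1 then 1 else 0)"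
    and "toggle_minus (chain_prod 2 b) prod_le (2, j) (fB p r) = (if j = r then 1 else 0)"
    and "toggle_plus (chain_prod 2 b) prod_le (2, j) (fB p r) = (if j = r + 1 \<and> r < p then 1 else 0)"
proof -
  let ?Q = "chain_prod 2 b" and ?I = "fB p r"
  have IQ: "?I \<subseteq> ?Q" using ideal_sub[OF fB_ideal[OF rp]] .
  have pl: "prod_le (x1, x2) (y1, y2) \<longleftrightarrow> x1 \<le> y1 \<and> x2 \<le> y2" for x1 x2 y1 y2 :: nat
    unfolding prod_le_def by simp
  show "toggle_minus ?Q prod_le (1, j) ?I = (if j = p \<and> r < p then 1 else 0)"
  proof (cases "j = p \<and> r < p")
    case True
    have "\<forall>q\<in>?I. prod_le (1, j) q \<longrightarrow> q = (1, j)"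
    proof (intro ballI impI)
      fix q assume q: "q \<in> ?I" "prod_le (1, j) q"
      obtain q1 q2 where qq: "q = (q1, q2)" by force
      show "q = (1, j)" using q True unfolding qq fB_mem pl by auto
    qed
    moreover have "(1, j) \<in> ?I" using True j unfolding fB_mem by auto
    ultimately show ?thesis using True unfolding toggle_minus_def by auto
  next
    case False
    have "\<not> ((1, j) \<in> ?I \<and> (\<forall>q\<in>?I. prod_le (1, j) q \<longrightarrow> q = (1, j)))"
    proof
      assume h: "(1, j) \<in> ?I \<and> (\<forall>q\<in>?I. prod_le (1, j) q \<longrightarrow> q = (1, j))"
      then have jp: "j \<le> p" unfolding fB_mem by auto
      show False
      proof (cases "j < p")
        case True
        then have w: "(1, j + 1) \<in> ?I" using j unfolding fB_mem by auto
        have "prod_le (1, j) (1, j + 1)" unfolding prod_le_def by simp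
        then have "(1::nat, j + 1) = (1, j)" using h w by blast
        then show False by simp
      next
        case False
        then have "j = p" "p \<le> r" using jp \<open>\<not> (j = p \<and> r < p)\<close> by auto
        then have w: "(2, j) \<in> ?I" using j unfolding fB_mem by auto
        have "prod_le (1, j) (2, j)" unfolding prod_le_def by simp
        then have "(2::nat, j) = (1, j)" using h w by blast
        then show False by simp
      qed
    qed
    then show ?thesis using False unfolding toggle_minus_def by auto
  qed
  show "toggle_plus ?Q prod_le (1, j) ?I = (if j = p + 1 then 1 else 0)"
  proof (cases "j = p + 1")
    case True
    have "\<forall>q\<in>?Q - ?I. prod_le q (1, j) \<longrightarrow> q = (1, j)"
    proof (intro ballI impI)
      fix q assume q: "q \<in> ?Q - ?I" "prod_le q (1, j)"
      obtain q1 q2 where qq: "q = (q1, q2)" by force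
      show "q = (1, j)" using q True unfolding qq fB_mem QB_mem pl Diff_iff by auto
    qed
    moreover have "(1, j) \<in> ?Q - ?I" using True j unfolding fB_mem QB_mem Diff_iff by auto
    ultimately show ?thesis using True unfolding toggle_plus_def by auto
  next
    case False
    have "\<not> ((1, j) \<in> ?Q \<and> (1, j) \<notin> ?I \<and> (\<forall>q\<in>?Q - ?I. prod_le q (1, j) \<longrightarrow> q = (1, j)))"
    proof
      assume h: "(1, j) \<in> ?Q \<and> (1, j) \<notin> ?I \<and> (\<forall>q\<in>?Q - ?I. prod_le q (1, j) \<longrightarrow> q = (1, j))"
      then have "p < j" using j unfolding fB_mem by auto
      then have "p + 1 < j" using False by auto
      then have w: "(1, p + 1) \<in> ?Q - ?I" using j unfolding fB_mem QB_mem Diff_iff by auto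
      have "prod_le (1, p + 1) (1, j)" using \<open>p + 1 < j\<close> unfolding prod_le_def by simp
      then have "(1::nat, p + 1) = (1, j)" using h w by blast
      then show False using \<open>p + 1 < j\<close> by simp
    qed
    then show ?thesis using False unfolding toggle_plus_def by auto
  qed
  show "toggle_minus ?Q prod_le (2, j) ?I = (if j = r then 1 else 0)"
  proof (cases "j = r")
    case True
    have "\<forall>q\<in>?I. prod_le (2, j) q \<longrightarrow> q = (2, j)"
    proof (intro ballI impI)
      fix q assume q: "q \<in> ?I" "prod_le (2, j) q"
      obtain q1 q2 where qq: "q = (q1, q2)" by force
      show "q = (2, j)" using q True unfolding qq fB_mem pl by auto
    qed
    moreover have "(2, j) \<in> ?I" using True j unfolding fB_mem by auto
    ultimately show ?thesis using True unfolding toggle_minus_def by auto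
  next
    case False
    have "\<not> ((2, j) \<in> ?I \<and> (\<forall>q\<in>?I. prod_le (2, j) q \<longrightarrow> q = (2, j)))"
    proof
      assume h: "(2, j) \<in> ?I \<and> (\<forall>q\<in>?I. prod_le (2, j) q \<longrightarrow> q = (2, j))"
      then have "j < r" using False unfolding fB_mem by auto
      then have w: "(2, j + 1) \<in> ?I" using j unfolding fB_mem by auto
      have "prod_le (2, j) (2, j + 1)" unfolding prod_le_def by simp
      then have "(2::nat, j + 1) = (2, j)" using h w by blast
      then show False by simp
    qed
    then show ?thesis using False unfolding toggle_minus_def by auto
  qed
  show "toggle_plus ?Q prod_le (2, j) ?I = (if j = r + 1 \<and> r < p then 1 else 0)"
  proof (cases "j = r + 1 \<and> r < p")
    case True
    have "\<forall>q\<in>?Q - ?I. prod_le q (2, j) \<longrightarrow> q = (2, j)"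
    proof (intro ballI impI)
      fix q assume q: "q \<in> ?Q - ?I" "prod_le q (2, j)"
      obtain q1 q2 where qq: "q = (q1, q2)" by force
      show "q = (2, j)" using q True unfolding qq fB_mem QB_mem pl Diff_iff by auto
    qed
    moreover have "(2, j) \<in> ?Q - ?I" using True j unfolding fB_mem QB_mem Diff_iff by auto
    ultimately show ?thesis using True unfolding toggle_plus_def by auto
  next
    case False
    have "\<not> ((2, j) \<in> ?Q \<and> (2, j) \<notin> ?I \<and> (\<forall>q\<in>?Q - ?I. prod_le q (2, j) \<longrightarrow> q = (2, j)))"
    proof
      assume h: "(2, j) \<in> ?Q \<and> (2, j) \<notin> ?I \<and> (\<forall>q\<in>?Q - ?I. prod_le q (2, j) \<longrightarrow> q = (2, j))"
      then have rj: "r < j" using j unfolding fB_mem by auto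
      show False
      proof (cases "p < j")
        case True
        then have w: "(1, j) \<in> ?Q - ?I" using j unfolding fB_mem QB_mem Diff_iff by auto
        have "prod_le (1, j) (2, j)" unfolding prod_le_def by simp
        then have "(1::nat, j) = (2, j)" using h w by blast
        then show False by simp
      next
        case False
        then have "r + 1 < j" using rj \<open>\<not> (j = r + 1 \<and> r < p)\<close> by auto
        then have w: "(2, r + 1) \<in> ?Q - ?I" using j unfolding fB_mem QB_mem Diff_iff by auto
        have "prod_le (2, r + 1) (2, j)" using \<open>r + 1 < j\<close> unfolding prod_le_def by simp
        then have "(2::nat, r + 1) = (2, j)" using h w by blast
        then show False using \<open>r + 1 < j\<close> by simp
      qed
    qed
    then show ?thesis using False unfolding toggle_plus_def by auto
  qed
qed

lemma sum_two_deltas: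
  fixes c :: "'a \<Rightarrow> real"
  assumes "finite S"
  shows "(\<Sum>j\<in>S. (1 + c j) * (if j = u \<and> P then 1 else 0) - c j * (if j = v \<and> R then 1 else 0))
       = (if u \<in> S \<and> P then 1 + c u else 0) - (if v \<in> S \<and> R then c v else 0)"
proof -
  have "(\<Sum>j\<in>S. (1 + c j) * (if j = u \<and> P then 1 else 0) - c j * (if j = v \<and> R then 1 else 0))
      = (\<Sum>j\<in>S. if j = u then (if P then 1 + c j else 0) else 0) - (\<Sum>j\<in>S. if j = v then (if R then c j else 0) else 0)"
    unfolding sum_subtractf[symmetric] by (rule sum.cong) auto
  also have "\<dots> = (if u \<in> S \<and> P then 1 + c u else 0) - (if v \<in> S \<and> R then c v else 0)"
    unfolding sum.delta[OF assms] by auto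
  finally show ?thesis .
qed

definition cB :: "nat \<Rightarrow> nat \<times> nat \<Rightarrow> real" where
  "cB b q = (if fst q = 1 then (2 * real (snd q) - 2 * real b - 2) / (real b + 2)
             else (2 * real (snd q) - real b - 2) / (real b + 2))"

lemma certB: "cert (chain_prod 2 b) prod_le (cB b) (2 * real b / (real b + 2))"
  unfolding cert_def
proof
  fix I assume "I \<in> JJ (chain_prod 2 b) prod_le"
  then obtain p r where pr: "r \<le> p" "p \<le> b" "I = fB p r" using ideal_fB by blast
  let ?Q = "chain_prod 2 b"
  let ?F = "\<lambda>q. (1 + cB b q) * toggle_minus ?Q prod_le q I - cB b q * toggle_plus ?Q prod_le q I"
  define c1 where "c1 = (\<lambda>j::nat. (2 * real j - 2 * real b - 2) / (real b + 2))"
  define c2 where "c2 = (\<lambda>j::nat. (2 * real j - real b - 2) / (real b + 2))"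
  have inj1: "inj_on (\<lambda>j::nat. (1::nat, j)) {1..b}" by (rule inj_onI) auto
  have inj2: "inj_on (\<lambda>j::nat. (2::nat, j)) {1..b}" by (rule inj_onI) auto
  have disj: "(\<lambda>j::nat. (1::nat, j)) ` {1..b} \<inter> (\<lambda>j. (2, j)) ` {1..b} = {}" by auto
  have S: "sum ?F ?Q = sum ?F ((\<lambda>j. (1, j)) ` {1..b}) + sum ?F ((\<lambda>j. (2, j)) ` {1..b})"
    unfolding QB_eq by (rule sum.union_disjoint) (use disj in auto)
  have R1: "sum ?F ((\<lambda>j. (1, j)) ` {1..b}) = (if p \<in> {1..b} \<and> r < p then 1 + c1 p else 0) - (if p + 1 \<in> {1..b} \<and> True then c1 (p + 1) else 0)"
  proof -
    have "sum ?F ((\<lambda>j. (1, j)) ` {1..b}) = (\<Sum>j\<in>{1..b}. ?F (1, j))"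
      by (rule sum.reindex[OF inj1, unfolded comp_def])
    also have "\<dots> = (\<Sum>j\<in>{1..b}. (1 + c1 j) * (if j = p \<and> r < p then 1 else 0) - c1 j * (if j = p + 1 \<and> True then 1 else 0))"
    proof (rule sum.cong[OF refl])
      fix j assume "j \<in> {1..b}"
      then have j: "1 \<le> j" "j \<le> b" by auto
      show "?F (1, j) = (1 + c1 j) * (if j = p \<and> r < p then 1 else 0) - c1 j * (if j = p + 1 \<and> True then 1 else 0)"
        unfolding pr(3) togB(1)[OF pr(1,2) j] togB(2)[OF pr(1,2) j] cB_def c1_def by simp
    qed
    also have "\<dots> = (if p \<in> {1..b} \<and> r < p then 1 + c1 p else 0) - (if p + 1 \<in> {1..b} \<and> True then c1 (p + 1) else 0)"
      by (rule sum_two_deltas) simp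
    finally show ?thesis .
  qed
  have R2: "sum ?F ((\<lambda>j. (2, j)) ` {1..b}) = (if r \<in> {1..b} \<and> True then 1 + c2 r else 0) - (if r + 1 \<in> {1..b} \<and> r < p then c2 (r + 1) else 0)"
  proof -
    have "sum ?F ((\<lambda>j. (2, j)) ` {1..b}) = (\<Sum>j\<in>{1..b}. ?F (2, j))"
      by (rule sum.reindex[OF inj2, unfolded comp_def])
    also have "\<dots> = (\<Sum>j\<in>{1..b}. (1 + c2 j) * (if j = r \<and> True then 1 else 0) - c2 j * (if j = r + 1 \<and> r < p then 1 else 0))"
    proof (rule sum.cong[OF refl])
      fix j assume "j \<in> {1..b}"
      then have j: "1 \<le> j" "j \<le> b" by auto
      show "?F (2, j) = (1 + c2 j) * (if j = r \<and> True then 1 else 0) - c2 j * (if j = r + 1 \<and> r < p then 1 else 0)"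
        unfolding pr(3) togB(3)[OF pr(1,2) j] togB(4)[OF pr(1,2) j] cB_def c2_def by simp
    qed
    also have "\<dots> = (if r \<in> {1..b} \<and> True then 1 + c2 r else 0) - (if r + 1 \<in> {1..b} \<and> r < p then c2 (r + 1) else 0)"
      by (rule sum_two_deltas) simp
    finally show ?thesis .
  qed
  define K where "K = real b + 2"
  have K0: "K \<noteq> 0" unfolding K_def by simp
  have hb: "real b = K - 2" unfolding K_def by simp
  have c1K: "c1 = (\<lambda>j. (2 * real j - 2 * (K - 2) - 2) / K)" unfolding c1_def K_def by simp
  have c2K: "c2 = (\<lambda>j. (2 * real j - (K - 2) - 2) / K)" unfolding c2_def K_def by simp
  have E0: "(if p \<in> {1..b} \<and> r < p then 1 + c1 p else 0) - (if p + 1 \<in> {1..b} \<and> True then c1 (p + 1) else 0)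
      + ((if r \<in> {1..b} \<and> True then 1 + c2 r else 0) - (if r + 1 \<in> {1..b} \<and> r < p then c2 (r + 1) else 0))
      = (2 * K - 4) / K"
  proof (cases "r < p")
    case rp: True
    show ?thesis
    proof (cases "p < b")
      case True
      show ?thesis
      proof (cases "r = 0")
        case True then show ?thesis using rp \<open>p < b\<close> pr K0 by (simp add: c1K c2K field_simps)
      next
        case False then show ?thesis using rp \<open>p < b\<close> pr K0 by (simp add: c1K c2K field_simps)
      qed
    next
      case False
      then have "p = b" using pr by simp
      show ?thesis
      proof (cases "r = 0")
        case True then show ?thesis using rp \<open>p = b\<close> pr K0 hb by (simp add: c1K c2K field_simps)
      next
        case False then show ?thesis using rp \<open>p = b\<close> pr K0 hb by (simp add: c1K c2K field_simps)
      qed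
    qed
  next
    case False
    then have rp: "r = p" using pr by simp
    show ?thesis
    proof (cases "p < b")
      case True
      show ?thesis
      proof (cases "r = 0")
        case True then show ?thesis using rp \<open>p < b\<close> pr K0 hb by (simp add: c1K c2K field_simps)
      next
        case False then show ?thesis using rp \<open>p < b\<close> pr K0 hb by (simp add: c1K c2K field_simps)
      qed
    next
      case False
      then have "p = b" using pr by simp
      show ?thesis
      proof (cases "r = 0")
        case True then show ?thesis using rp \<open>p = b\<close> pr K0 hb by (simp add: c1K c2K field_simps)
      next
        case False then show ?thesis using rp \<open>p = b\<close> pr K0 hb by (simp add: c1K c2K field_simps)
      qed
    qed
  qed
  have E1: "(2 * K - 4) / K = 2 * real b / (real b + 2)" unfolding K_def by (simp add: algebra_simps)
  show "sum ?F ?Q = 2 * real b / (real b + 2)" using S R1 R2 E0 E1 by simp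
qed

lemma famB:
  "\<exists>c C. finite (chain_prod 2 b) \<and> po (chain_prod 2 b) prod_le \<and> cert (chain_prod 2 b) prod_le c C \<and>
     poset_iso (young_interval b) (\<le>) (JJ (chain_prod 2 b) prod_le) (\<subseteq>)"
  using certB isoB po_prod_le by (auto simp: chain_prod_def)


fun leC :: "pelt \<Rightarrow> pelt \<Rightarrow> bool" where
  "leC (W i) (W j) = (i \<le> j)"
| "leC (W i) X = True"
| "leC (W i) Y = True"
| "leC (W i) (Z j) = True"
| "leC X X = True"
| "leC X (Z j) = True"
| "leC Y Y = True"
| "leC Y (Z j) = True"
| "leC (Z i) (Z j) = (i \<le> j)"
| "leC _ _ = False"

lemma leC_refl: "leC u u" by (cases u) auto

lemma leC_trans: "leC u v \<Longrightarrow> leC v w \<Longrightarrow> leC u w"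
  by (cases u; cases v; cases w) auto

lemma leC_antisym: "leC u v \<Longrightarrow> leC v u \<Longrightarrow> u = v"
  by (cases u; cases v) auto

lemma pelt_ball: "(\<forall>p\<in>S. P p) \<longleftrightarrow> (\<forall>k. W k \<in> S \<longrightarrow> P (W k)) \<and> (X \<in> S \<longrightarrow> P X) \<and> (Y \<in> S \<longrightarrow> P Y) \<and> (\<forall>k. Z k \<in> S \<longrightarrow> P (Z k))"
  by (metis pelt.exhaust)

lemma cover_leC: "cover_a11a a y z \<Longrightarrow> leC u y \<Longrightarrow> leC u z"
  unfolding cover_a11a_def by (cases u) auto

lemma le_a11a_leC: "le_a11a a u v \<Longrightarrow> leC u v"
  unfolding le_a11a_def
proof (induction rule: rtranclp_induct)
  case base then show ?case by (rule leC_refl)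
next
  case (step y z) then show ?case using cover_leC by blast
qed

lemma chainW0: "i \<le> j \<Longrightarrow> 1 \<le> i \<Longrightarrow> j \<le> a \<Longrightarrow> le_a11a a (W i) (W j)"
proof (induction j rule: dec_induct)
  case base then show ?case unfolding le_a11a_def by simp
next
  case (step n)
  then have c: "cover_a11a a (W n) (W (Suc n))" unfolding cover_a11a_def by auto
  have "le_a11a a (W i) (W n)" using step by simp
  then show ?case using c unfolding le_a11a_def by (rule rtranclp.rtrancl_into_rtrancl)
qed

lemma chainW: "1 \<le> i \<Longrightarrow> i \<le> j \<Longrightarrow> j \<le> a \<Longrightarrow> le_a11a a (W i) (W j)"
  using chainW0 by blast

lemma chainZ0: "i \<le> j \<Longrightarrow> 1 \<le> i \<Longrightarrow> j \<le> a \<Longrightarrow> le_a11a a (Z i) (Z j)"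
proof (induction j rule: dec_induct)
  case base then show ?case unfolding le_a11a_def by simp
next
  case (step n)
  then have c: "cover_a11a a (Z n) (Z (Suc n))" unfolding cover_a11a_def by auto
  have "le_a11a a (Z i) (Z n)" using step by simp
  then show ?case using c unfolding le_a11a_def by (rule rtranclp.rtrancl_into_rtrancl)
qed

lemma chainZ: "1 \<le> i \<Longrightarrow> i \<le> j \<Longrightarrow> j \<le> a \<Longrightarrow> le_a11a a (Z i) (Z j)"
  using chainZ0 by blast

lemma le_a11a_trans: "le_a11a a u v \<Longrightarrow> le_a11a a v w \<Longrightarrow> le_a11a a u w"
  unfolding le_a11a_def by (rule rtranclp_trans)

lemma cov_le: "cover_a11a a u v \<Longrightarrow> le_a11a a u v"
  unfolding le_a11a_def by simp

lemma WX: "1 \<le> a \<Longrightarrow> 1 \<le> i \<Longrightarrow> i \<le> a \<Longrightarrow> le_a11a a (W i) X"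
  using chainW[of i a a] cov_le[of a "W a" X] le_a11a_trans unfolding cover_a11a_def by blast
lemma WY: "1 \<le> a \<Longrightarrow> 1 \<le> i \<Longrightarrow> i \<le> a \<Longrightarrow> le_a11a a (W i) Y"
  using chainW[of i a a] cov_le[of a "W a" Y] le_a11a_trans unfolding cover_a11a_def by blast
lemma XZ: "1 \<le> j \<Longrightarrow> j \<le> a \<Longrightarrow> le_a11a a X (Z j)"
  using chainZ[of 1 j a] cov_le[of a X "Z 1"] le_a11a_trans unfolding cover_a11a_def by blast
lemma YZ: "1 \<le> j \<Longrightarrow> j \<le> a \<Longrightarrow> le_a11a a Y (Z j)"
  using chainZ[of 1 j a] cov_le[of a Y "Z 1"] le_a11a_trans unfolding cover_a11a_def by blast

lemma P_mem: "u \<in> P_a11a a \<longleftrightarrow> (\<exists>i. u = W i \<and> 1 \<le> i \<and> i \<le> a) \<or> u = X \<or> u = Y \<or> (\<exists>i. u = Z i \<and> 1 \<le> i \<and> i \<le> a)"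
  unfolding P_a11a_def by auto

lemma le_a11a_iff:
  assumes "1 \<le> a" "u \<in> P_a11a a" "v \<in> P_a11a a"
  shows "le_a11a a u v \<longleftrightarrow> leC u v"
proof
  assume "le_a11a a u v" then show "leC u v" by (rule le_a11a_leC)
next
  assume h: "leC u v"
  show "le_a11a a u v"
  proof (cases u)
    case (W i)
    then have i: "1 \<le> i" "i \<le> a" using assms(2) P_mem by auto
    show ?thesis
    proof (cases v)
      case (W j) then show ?thesis using h i \<open>u = W i\<close> assms(3) P_mem chainW by auto
    next
      case X then show ?thesis using WX assms i \<open>u = W i\<close> by simp
    next
      case Y then show ?thesis using WY assms i \<open>u = W i\<close> by simp
    next
      case (Z j)
      then have "1 \<le> j" "j \<le> a" using assms(3) P_mem by auto
      then show ?thesis using WX[OF assms(1) i] XZ Z \<open>u = W i\<close> le_a11a_trans by blast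
    qed
  next
    case X
    then show ?thesis using h assms(3) P_mem XZ unfolding le_a11a_def by (cases v) auto
  next
    case Y
    then show ?thesis using h assms(3) P_mem YZ unfolding le_a11a_def by (cases v) auto
  next
    case (Z i)
    then have i: "1 \<le> i" using assms(2) P_mem by auto
    show ?thesis using h Z i assms(3) P_mem chainZ by (cases v) auto
  qed
qed

definition QC :: "nat \<Rightarrow> pelt set" where
  "QC a = W ` {2..a} \<union> {X, Y} \<union> Z ` {2..a}"

lemma QC_mem [simp]: "W k \<in> QC a \<longleftrightarrow> 2 \<le> k \<and> k \<le> a" "X \<in> QC a" "Y \<in> QC a"
  "Z k \<in> QC a \<longleftrightarrow> 2 \<le> k \<and> k \<le> a"
  unfolding QC_def by auto

definition gC :: "nat \<Rightarrow> pelt \<Rightarrow> pelt set" where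
  "gC a v = {q \<in> QC a. leC q v}"

lemma gC_mem: "q \<in> gC a v \<longleftrightarrow> q \<in> QC a \<and> leC q v"
  unfolding gC_def by simp

lemma gC_ideal: "gC a v \<in> JJ (QC a) leC"
  unfolding order_ideals_def gC_def using leC_trans by blast

lemma gC_order:
  assumes "1 \<le> a" "u \<in> P_a11a a" "v \<in> P_a11a a"
  shows "leC u v \<longleftrightarrow> gC a u \<subseteq> gC a v"
proof
  assume "leC u v" then show "gC a u \<subseteq> gC a v" unfolding gC_def using leC_trans by blast
next
  assume sub: "gC a u \<subseteq> gC a v"
  show "leC u v"
  proof (cases "u \<in> QC a")
    case True
    then have "u \<in> gC a u" unfolding gC_mem using leC_refl by simp
    then have "u \<in> gC a v" using sub by blast
    then show ?thesis unfolding gC_mem by blast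
  next
    case False
    then have "u = W 1 \<or> u = Z 1" using assms(2) unfolding P_mem by auto
    then show ?thesis
    proof
      assume "u = W 1"
      then show ?thesis using assms(3) unfolding P_mem by auto
    next
      assume u: "u = Z 1"
      have "X \<in> gC a u" "Y \<in> gC a u" unfolding gC_mem u by auto
      then have "X \<in> gC a v" "Y \<in> gC a v" using sub by blast+
      then have "leC X v" "leC Y v" unfolding gC_mem by auto
      then obtain j where "v = Z j" by (cases v) auto
      then show ?thesis using u assms(3) unfolding P_mem by auto
    qed
  qed
qed

lemma prefix2:
  fixes S :: "nat set"
  assumes "S \<subseteq> {2..a}" "\<forall>i\<in>S. \<forall>k. 2 \<le> k \<and> k \<le> i \<longrightarrow> k \<in> S" "1 \<le> a"
  shows "\<exists>m. 1 \<le> m \<and> m \<le> a \<and> S = {k. 2 \<le> k \<and> k \<le> m}"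
proof (cases "S = {}")
  case True then show ?thesis using assms(3) by (intro exI[of _ 1]) auto
next
  case False
  have fin: "finite S" using assms(1) finite_subset by blast
  let ?m = "Max S"
  have mS: "?m \<in> S" using Max_in[OF fin False] .
  have "S = {k. 2 \<le> k \<and> k \<le> ?m}"
  proof
    show "S \<subseteq> {k. 2 \<le> k \<and> k \<le> ?m}" using Max_ge[OF fin] assms(1) by fastforce
    show "{k. 2 \<le> k \<and> k \<le> ?m} \<subseteq> S" using assms(2) mS by auto
  qed
  moreover have "1 \<le> ?m" "?m \<le> a" using mS assms(1) by auto
  ultimately show ?thesis by blast
qed

lemma set_eq_pelt:
  assumes "\<And>k. W k \<in> A \<longleftrightarrow> W k \<in> B" "X \<in> A \<longleftrightarrow> X \<in> B" "Y \<in> A \<longleftrightarrow> Y \<in> B"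
    "\<And>k. Z k \<in> A \<longleftrightarrow> Z k \<in> B"
  shows "A = B"
proof (rule set_eqI)
  fix q show "q \<in> A \<longleftrightarrow> q \<in> B" using assms by (cases q) auto
qed

lemma ideal_gC:
  assumes a: "1 \<le> a" and I: "I \<in> JJ (QC a) leC"
  shows "\<exists>v\<in>P_a11a a. I = gC a v"
proof -
  have IQ: "I \<subseteq> QC a" using ideal_sub[OF I] .
  have dn: "\<And>x y. x \<in> I \<Longrightarrow> y \<in> QC a \<Longrightarrow> leC y x \<Longrightarrow> y \<in> I" using ideal_down[OF I] by blast
  have ZX: "\<And>k. Z k \<in> I \<Longrightarrow> X \<in> I \<and> Y \<in> I" using dn by fastforce
  have XW: "\<And>k. X \<in> I \<or> Y \<in> I \<Longrightarrow> W k \<in> QC a \<Longrightarrow> W k \<in> I" using dn by fastforce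
  have WQ: "\<And>k. W k \<in> I \<Longrightarrow> 2 \<le> k \<and> k \<le> a" using IQ by auto
  have ZQ: "\<And>k. Z k \<in> I \<Longrightarrow> 2 \<le> k \<and> k \<le> a" using IQ by auto
  consider "X \<notin> I" "Y \<notin> I" | "X \<in> I" "Y \<notin> I" | "X \<notin> I" "Y \<in> I" | "X \<in> I" "Y \<in> I" by blast
  then show ?thesis
  proof cases
    case 1
    let ?S = "{k. W k \<in> I}"
    have "?S \<subseteq> {2..a}" using WQ by auto
    moreover have "\<forall>i\<in>?S. \<forall>k. 2 \<le> k \<and> k \<le> i \<longrightarrow> k \<in> ?S"
    proof (intro ballI allI impI)
      fix i k assume "i \<in> ?S" "2 \<le> k \<and> k \<le> i"
      then show "k \<in> ?S" using dn[of "W i" "W k"] WQ[of i] by auto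
    qed
    ultimately obtain m where m: "1 \<le> m" "m \<le> a" "?S = {k. 2 \<le> k \<and> k \<le> m}" using prefix2 a by blast
    have Sm: "W k \<in> I \<longleftrightarrow> 2 \<le> k \<and> k \<le> m" for k
    proof -
      have "k \<in> ?S \<longleftrightarrow> k \<in> {k. 2 \<le> k \<and> k \<le> m}" using m(3) by (rule arg_cong)
      then show ?thesis by simp
    qed
    have nZ: "\<And>k. Z k \<notin> I" using ZX 1 by blast
    have "I = gC a (W m)"
      by (rule set_eq_pelt) (use m(2) in \<open>auto simp: gC_mem Sm nZ 1\<close>)
    moreover have "W m \<in> P_a11a a" using m unfolding P_mem by auto
    ultimately show ?thesis by blast
  next
    case 2
    have nZ: "\<And>k. Z k \<notin> I" using ZX 2 by blast
    have Wk: "\<And>k. W k \<in> I \<longleftrightarrow> 2 \<le> k \<and> k \<le> a" using XW WQ 2 QC_mem(1) by blast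
    have "I = gC a X"
      by (rule set_eq_pelt) (simp_all add: gC_mem Wk nZ 2)
    moreover have "X \<in> P_a11a a" unfolding P_mem by auto
    ultimately show ?thesis by blast
  next
    case 3
    have nZ: "\<And>k. Z k \<notin> I" using ZX 3 by blast
    have Wk: "\<And>k. W k \<in> I \<longleftrightarrow> 2 \<le> k \<and> k \<le> a" using XW WQ 3 QC_mem(1) by blast
    have "I = gC a Y"
      by (rule set_eq_pelt) (simp_all add: gC_mem Wk nZ 3)
    moreover have "Y \<in> P_a11a a" unfolding P_mem by auto
    ultimately show ?thesis by blast
  next
    case 4
    let ?S = "{k. Z k \<in> I}"
    have "?S \<subseteq> {2..a}" using ZQ by auto
    moreover have "\<forall>i\<in>?S. \<forall>k. 2 \<le> k \<and> k \<le> i \<longrightarrow> k \<in> ?S"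
    proof (intro ballI allI impI)
      fix i k assume "i \<in> ?S" "2 \<le> k \<and> k \<le> i"
      then show "k \<in> ?S" using dn[of "Z i" "Z k"] ZQ[of i] by auto
    qed
    ultimately obtain m where m: "1 \<le> m" "m \<le> a" "?S = {k. 2 \<le> k \<and> k \<le> m}" using prefix2 a by blast
    have Sm: "Z k \<in> I \<longleftrightarrow> 2 \<le> k \<and> k \<le> m" for k
    proof -
      have "k \<in> ?S \<longleftrightarrow> k \<in> {k. 2 \<le> k \<and> k \<le> m}" using m(3) by (rule arg_cong)
      then show ?thesis by simp
    qed
    have Wk: "\<And>k. W k \<in> I \<longleftrightarrow> 2 \<le> k \<and> k \<le> a" using XW WQ 4 QC_mem(1) by blast
    have "I = gC a (Z m)"
      by (rule set_eq_pelt) (use m(2) in \<open>auto simp: gC_mem Sm Wk 4\<close>)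
    moreover have "Z m \<in> P_a11a a" using m unfolding P_mem by auto
    ultimately show ?thesis by blast
  qed
qed

lemma isoC:
  assumes a: "1 \<le> a"
  shows "poset_iso (P_a11a a) (le_a11a a) (JJ (QC a) leC) (\<subseteq>)"
proof -
  have ord: "\<forall>x\<in>P_a11a a. \<forall>y\<in>P_a11a a. le_a11a a x y \<longleftrightarrow> gC a x \<subseteq> gC a y"
    using le_a11a_iff[OF a] gC_order[OF a] by blast
  have inj: "inj_on (gC a) (P_a11a a)"
  proof (rule inj_onI)
    fix x y assume xy: "x \<in> P_a11a a" "y \<in> P_a11a a" "gC a x = gC a y"
    then have "leC x y" "leC y x" using gC_order[OF a] by auto
    then show "x = y" by (rule leC_antisym)
  qed
  have img: "gC a ` P_a11a a = JJ (QC a) leC"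
    using gC_ideal ideal_gC[OF a] by blast
  show ?thesis unfolding poset_iso_def bij_betw_def using inj img ord by blast
qed

lemma tp_zero_in: "q \<in> I \<Longrightarrow> toggle_plus Q le q I = 0"
  unfolding toggle_plus_def by simp
lemma tm_zero_out: "q \<notin> I \<Longrightarrow> toggle_minus Q le q I = 0"
  unfolding toggle_minus_def by simp
lemma tp_zero_wit: "p \<in> Q \<Longrightarrow> p \<notin> I \<Longrightarrow> le p q \<Longrightarrow> p \<noteq> q \<Longrightarrow> toggle_plus Q le q I = 0"
  unfolding toggle_plus_def by auto
lemma tm_zero_wit: "p \<in> I \<Longrightarrow> le q p \<Longrightarrow> p \<noteq> q \<Longrightarrow> toggle_minus Q le q I = 0"
  unfolding toggle_minus_def by auto
lemma tp_one: "q \<in> Q \<Longrightarrow> q \<notin> I \<Longrightarrow> (\<forall>p\<in>Q. p \<notin> I \<longrightarrow> le p q \<longrightarrow> p = q) \<Longrightarrow> toggle_plus Q le q I = 1"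
  unfolding toggle_plus_def by auto
lemma tm_one: "q \<in> I \<Longrightarrow> (\<forall>p\<in>I. le q p \<longrightarrow> p = q) \<Longrightarrow> toggle_minus Q le q I = 1"
  unfolding toggle_minus_def by auto

lemma sum_QC: "sum f (QC a) = (\<Sum>k\<in>{2..a}. f (W k)) + f X + f Y + (\<Sum>k\<in>{2..a}. f (Z k))"
proof -
  have d1: "(W ` {2..a} \<union> {X, Y}) \<inter> Z ` {2..a} = {}" by auto
  have d2: "W ` {2..a} \<inter> {X, Y} = {}" by auto
  have "sum f (QC a) = sum f (W ` {2..a} \<union> {X, Y}) + sum f (Z ` {2..a})"
    unfolding QC_def by (rule sum.union_disjoint) (use d1 in auto)
  also have "sum f (W ` {2..a} \<union> {X, Y}) = sum f (W ` {2..a}) + sum f {X, Y}"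
    by (rule sum.union_disjoint) (use d2 in auto)
  also have "sum f (W ` {2..a}) = (\<Sum>k\<in>{2..a}. f (W k))"
    by (rule sum.reindex[unfolded comp_def]) (auto intro: inj_onI)
  also have "sum f (Z ` {2..a}) = (\<Sum>k\<in>{2..a}. f (Z k))"
    by (rule sum.reindex[unfolded comp_def]) (auto intro: inj_onI)
  also have "sum f {X, Y} = f X + f Y" by simp
  finally show ?thesis by (simp add: add.assoc)
qed

definition cC :: "pelt \<Rightarrow> real" where
  "cC q = (case q of W _ \<Rightarrow> -1 | X \<Rightarrow> -1/2 | Y \<Rightarrow> -1/2 | Z _ \<Rightarrow> 0)"

lemma certC:
  assumes a: "1 \<le> a"
  shows "cert (QC a) leC cC 1"
  unfolding cert_def
proof
  fix I assume "I \<in> JJ (QC a) leC"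
  then obtain v where v: "v \<in> P_a11a a" "I = gC a v" using ideal_gC[OF a] by blast
  let ?Tm = "\<lambda>q. toggle_minus (QC a) leC q I" and ?Tp = "\<lambda>q. toggle_plus (QC a) leC q I"
  let ?F = "\<lambda>q. (1 + cC q) * ?Tm q - cC q * ?Tp q"
  have FW: "?F (W k) = ?Tp (W k)" for k unfolding cC_def by simp
  have FX: "?F X = ?Tm X / 2 + ?Tp X / 2" unfolding cC_def by simp
  have FY: "?F Y = ?Tm Y / 2 + ?Tp Y / 2" unfolding cC_def by simp
  have FZ: "?F (Z k) = ?Tm (Z k)" for k unfolding cC_def by simp
  have mem: "q \<in> I \<longleftrightarrow> q \<in> QC a \<and> leC q v" for q using v(2) gC_mem by simp
  have S: "sum ?F (QC a) = (\<Sum>k\<in>{2..a}. ?Tp (W k)) + (?Tm X / 2 + ?Tp X / 2) + (?Tm Y / 2 + ?Tp Y / 2)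
            + (\<Sum>k\<in>{2..a}. ?Tm (Z k))"
    unfolding sum_QC FW FX FY FZ ..
  consider m where "v = W m" "1 \<le> m" "m \<le> a" | "v = X" | "v = Y" | m where "v = Z m" "1 \<le> m" "m \<le> a"
    using v(1) unfolding P_mem by blast
  then show "sum ?F (QC a) = 1"
  proof cases
    case (1 m)
    have TW: "?Tp (W k) = (if k = m + 1 then 1 else 0)" if k: "k \<in> {2..a}" for k
    proof (cases "k \<le> m")
      case True then show ?thesis using k by (auto simp: mem 1 intro: tp_zero_in)
    next
      case False
      show ?thesis
      proof (cases "k = m + 1")
        case True
        have "?Tp (W k) = 1"
          by (rule tp_one) (use k True in \<open>auto simp: mem 1 pelt_ball\<close>)
        then show ?thesis using True by simp
      next
        case kk: False
        have "?Tp (W k) = 0"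
          by (rule tp_zero_wit[of "W (m + 1)"]) (use k False kk 1 in \<open>auto simp: mem\<close>)
        then show ?thesis using kk by simp
      qed
    qed
    have "(\<Sum>k\<in>{2..a}. ?Tp (W k)) = (\<Sum>k\<in>{2..a}. if k = m + 1 then 1 else 0)"
      by (rule sum.cong) (auto simp: TW)
    also have "\<dots> = (if m < a then 1 else 0)" using 1 by (simp add: sum.delta)
    finally have sW: "(\<Sum>k\<in>{2..a}. ?Tp (W k)) = (if m < a then 1 else 0)" .
    have tmX: "?Tm X = 0" by (rule tm_zero_out) (simp add: mem 1)
    have tmY: "?Tm Y = 0" by (rule tm_zero_out) (simp add: mem 1)
    have tpX: "?Tp X = (if m = a then 1 else 0)"
    proof (cases "m = a")
      case True
      have "?Tp X = 1" by (rule tp_one) (use True 1 in \<open>auto simp: mem pelt_ball\<close>)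
      then show ?thesis using True by simp
    next
      case False
      have "?Tp X = 0" by (rule tp_zero_wit[of "W (m + 1)"]) (use False 1 in \<open>auto simp: mem\<close>)
      then show ?thesis using False by simp
    qed
    have tpY: "?Tp Y = (if m = a then 1 else 0)"
    proof (cases "m = a")
      case True
      have "?Tp Y = 1" by (rule tp_one) (use True 1 in \<open>auto simp: mem pelt_ball\<close>)
      then show ?thesis using True by simp
    next
      case False
      have "?Tp Y = 0" by (rule tp_zero_wit[of "W (m + 1)"]) (use False 1 in \<open>auto simp: mem\<close>)
      then show ?thesis using False by simp
    qed
    have sZ: "(\<Sum>k\<in>{2..a}. ?Tm (Z k)) = 0"
      by (rule sum.neutral) (auto simp: mem 1 intro: tm_zero_out)
    show ?thesis unfolding S sW tmX tmY tpX tpY sZ using 1 by auto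
  next
    case 2
    have sW: "(\<Sum>k\<in>{2..a}. ?Tp (W k)) = 0"
      by (rule sum.neutral) (auto simp: mem 2 intro: tp_zero_in)
    have sZ: "(\<Sum>k\<in>{2..a}. ?Tm (Z k)) = 0"
      by (rule sum.neutral) (auto simp: mem 2 intro: tm_zero_out)
    have tmX: "?Tm X = 1" by (rule tm_one) (auto simp: mem 2 pelt_ball)
    have tpX: "?Tp X = 0" by (rule tp_zero_in) (simp add: mem 2)
    have tmY: "?Tm Y = 0" by (rule tm_zero_out) (simp add: mem 2)
    have tpY: "?Tp Y = 1" by (rule tp_one) (auto simp: mem 2 pelt_ball)
    show ?thesis unfolding S sW tmX tmY tpX tpY sZ by simp
  next
    case 3
    have sW: "(\<Sum>k\<in>{2..a}. ?Tp (W k)) = 0"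
      by (rule sum.neutral) (auto simp: mem 3 intro: tp_zero_in)
    have sZ: "(\<Sum>k\<in>{2..a}. ?Tm (Z k)) = 0"
      by (rule sum.neutral) (auto simp: mem 3 intro: tm_zero_out)
    have tmY: "?Tm Y = 1" by (rule tm_one) (auto simp: mem 3 pelt_ball)
    have tpY: "?Tp Y = 0" by (rule tp_zero_in) (simp add: mem 3)
    have tmX: "?Tm X = 0" by (rule tm_zero_out) (simp add: mem 3)
    have tpX: "?Tp X = 1" by (rule tp_one) (auto simp: mem 3 pelt_ball)
    show ?thesis unfolding S sW tmX tmY tpX tpY sZ by simp
  next
    case (4 m)
    have sW: "(\<Sum>k\<in>{2..a}. ?Tp (W k)) = 0"
      by (rule sum.neutral) (auto simp: mem 4 intro: tp_zero_in)
    have tpX: "?Tp X = 0" by (rule tp_zero_in) (simp add: mem 4)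
    have tpY: "?Tp Y = 0" by (rule tp_zero_in) (simp add: mem 4)
    have tmX: "?Tm X = (if m = 1 then 1 else 0)"
    proof (cases "m = 1")
      case True
      have "?Tm X = 1" by (rule tm_one) (use True 4 in \<open>auto simp: mem pelt_ball\<close>)
      then show ?thesis using True by simp
    next
      case False
      have "?Tm X = 0" by (rule tm_zero_wit[of "Z m"]) (use False 4 in \<open>auto simp: mem\<close>)
      then show ?thesis using False by simp
    qed
    have tmY: "?Tm Y = (if m = 1 then 1 else 0)"
    proof (cases "m = 1")
      case True
      have "?Tm Y = 1" by (rule tm_one) (use True 4 in \<open>auto simp: mem pelt_ball\<close>)
      then show ?thesis using True by simp
    next
      case False
      have "?Tm Y = 0" by (rule tm_zero_wit[of "Z m"]) (use False 4 in \<open>auto simp: mem\<close>)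
      then show ?thesis using False by simp
    qed
    have TZ: "?Tm (Z k) = (if k = m then 1 else 0)" if k: "k \<in> {2..a}" for k
    proof (cases "k \<le> m")
      case False then show ?thesis using k by (auto simp: mem 4 intro: tm_zero_out)
    next
      case True
      show ?thesis
      proof (cases "k = m")
        case True
        have "?Tm (Z k) = 1"
          by (rule tm_one) (use k True 4 in \<open>auto simp: mem pelt_ball\<close>)
        then show ?thesis using True by simp
      next
        case kk: False
        have "?Tm (Z k) = 0"
          by (rule tm_zero_wit[of "Z (k + 1)"]) (use k True kk 4 in \<open>auto simp: mem\<close>)
        then show ?thesis using kk by simp
      qed
    qed
    have "(\<Sum>k\<in>{2..a}. ?Tm (Z k)) = (\<Sum>k\<in>{2..a}. if k = m then 1 else 0)"
      by (rule sum.cong) (auto simp: TZ)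
    also have "\<dots> = (if 2 \<le> m then 1 else 0)" using 4 by (simp add: sum.delta')
    finally have sZ: "(\<Sum>k\<in>{2..a}. ?Tm (Z k)) = (if 2 \<le> m then 1 else 0)" .
    show ?thesis unfolding S sW tmX tmY tpX tpY sZ using 4 by auto
  qed
qed

lemma famC:
  assumes "1 \<le> a"
  shows "\<exists>c C. finite (QC a) \<and> po (QC a) leC \<and> cert (QC a) leC c C \<and>
     poset_iso (P_a11a a) (le_a11a a) (JJ (QC a) leC) (\<subseteq>)"
proof -
  have "finite (QC a)" unfolding QC_def by simp
  moreover have "po (QC a) leC" unfolding partial_order_on'_def using leC_refl leC_trans leC_antisym by blast
  ultimately show ?thesis using certC[OF assms] isoC[OF assms] by blast
qed


definition idl_step :: "('a \<Rightarrow> 'a \<Rightarrow> bool) \<Rightarrow> 'a \<Rightarrow> 'a list \<Rightarrow> 'a list list \<Rightarrow> 'a list list" where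
  "idl_step le m ms r = r @ map (Cons m) (filter (\<lambda>I. \<forall>p\<in>set ms. le p m \<longrightarrow> p \<in> set I) r)"

fun idl :: "('a \<Rightarrow> 'a \<Rightarrow> bool) \<Rightarrow> 'a list \<Rightarrow> 'a list list" where
  "idl le [] = [[]]"
| "idl le (m # ms) = idl_step le m ms (idl le ms)"

fun okl :: "('a \<Rightarrow> 'a \<Rightarrow> bool) \<Rightarrow> 'a list \<Rightarrow> bool" where
  "okl le [] = True"
| "okl le (m # ms) = ((\<forall>p\<in>set ms. \<not> le m p) \<and> okl le ms)"

lemma okl_distinct: "po (set L) le \<Longrightarrow> okl le L \<Longrightarrow> distinct L"
proof (induction L)
  case Nil then show ?case by simp
next
  case (Cons m ms)
  have "po (set ms) le" using po_subset[OF Cons.prems(1)] by auto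
  moreover have "m \<notin> set ms" using Cons.prems po_refl[OF Cons.prems(1), of m] by auto
  ultimately show ?case using Cons by auto
qed

lemma idl_step:
  assumes po: "po (insert m S) le" and mx: "\<forall>p\<in>S. \<not> le m p" and mS: "m \<notin> S"
  shows "JJ (insert m S) le = JJ S le \<union> insert m ` {I \<in> JJ S le. {p\<in>S. le p m} \<subseteq> I}"
proof
  show "JJ (insert m S) le \<subseteq> JJ S le \<union> insert m ` {I \<in> JJ S le. {p\<in>S. le p m} \<subseteq> I}"
  proof
    fix I assume I: "I \<in> JJ (insert m S) le"
    have IQ: "I \<subseteq> insert m S" using ideal_sub[OF I] .
    show "I \<in> JJ S le \<union> insert m ` {I \<in> JJ S le. {p\<in>S. le p m} \<subseteq> I}"
    proof (cases "m \<in> I")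
      case False
      then have "I \<subseteq> S" using IQ by auto
      then have "I \<in> JJ S le" using ideal_down[OF I] unfolding order_ideals_def by blast
      then show ?thesis by blast
    next
      case True
      have "I - {m} \<subseteq> S" using IQ by auto
      moreover have "y \<in> I - {m}" if "x \<in> I - {m}" "y \<in> S" "le y x" for x y
        using ideal_down[OF I, of x y] that mS by auto
      ultimately have J1: "I - {m} \<in> JJ S le" unfolding order_ideals_def by blast
      have "{p\<in>S. le p m} \<subseteq> I - {m}" using ideal_down[OF I True] mS by auto
      moreover have "I = insert m (I - {m})" using True by auto
      ultimately show ?thesis using J1 by blast
    qed
  qed
  show "JJ S le \<union> insert m ` {I \<in> JJ S le. {p\<in>S. le p m} \<subseteq> I} \<subseteq> JJ (insert m S) le"
  proof
    fix I assume "I \<in> JJ S le \<union> insert m ` {I \<in> JJ S le. {p\<in>S. le p m} \<subseteq> I}"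
    then show "I \<in> JJ (insert m S) le"
    proof
      assume I: "I \<in> JJ S le"
      have "I \<subseteq> insert m S" using ideal_sub[OF I] by auto
      moreover have "y \<in> I" if "x \<in> I" "y \<in> insert m S" "le y x" for x y
      proof (cases "y = m")
        case True
        then have "x \<in> S" "le m x" using that ideal_sub[OF I] by auto
        then show ?thesis using mx by auto
      next
        case False then show ?thesis using ideal_down[OF I] that by auto
      qed
      ultimately show ?thesis unfolding order_ideals_def by blast
    next
      assume "I \<in> insert m ` {I \<in> JJ S le. {p\<in>S. le p m} \<subseteq> I}"
      then obtain I0 where I0: "I0 \<in> JJ S le" "{p\<in>S. le p m} \<subseteq> I0" "I = insert m I0" by blast
      have "I \<subseteq> insert m S" using ideal_sub[OF I0(1)] I0 by auto
      moreover have "y \<in> I" if "x \<in> I" "y \<in> insert m S" "le y x" for x y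
      proof (cases "y = m")
        case True then show ?thesis using I0 by auto
      next
        case False
        then have yS: "y \<in> S" using that by auto
        show ?thesis
        proof (cases "x = m")
          case True then show ?thesis using I0 yS that by auto
        next
          case False
          then have "x \<in> I0" using that I0 by auto
          then show ?thesis using ideal_down[OF I0(1) _ yS] that I0 by auto
        qed
      qed
      ultimately show ?thesis unfolding order_ideals_def by blast
    qed
  qed
qed

lemma idl_correct: "po (set L) le \<Longrightarrow> okl le L \<Longrightarrow> JJ (set L) le = set (map set (idl le L))"
proof (induction L)
  case Nil then show ?case by (auto simp: order_ideals_def)
next
  case (Cons m ms)
  have pos: "po (set ms) le" using po_subset[OF Cons.prems(1)] by auto
  have mx: "\<forall>p\<in>set ms. \<not> le m p" and ok: "okl le ms" using Cons.prems by auto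
  have mS: "m \<notin> set ms" using mx po_refl[OF Cons.prems(1), of m] by auto
  have IH: "JJ (set ms) le = set (map set (idl le ms))" using Cons.IH[OF pos ok] .
  have "JJ (set (m # ms)) le = JJ (set ms) le \<union> insert m ` {I \<in> JJ (set ms) le. {p\<in>set ms. le p m} \<subseteq> I}"
    using idl_step[of m "set ms" le] Cons.prems(1) mx mS by simp
  also have "\<dots> = set (map set (idl le (m # ms)))"
    unfolding IH by (auto simp: image_iff idl_step_def)
  finally show ?case .
qed

lemma sum_set_distinct: "distinct L \<Longrightarrow> sum f (set L) = sum_list (map f L)"
  by (simp add: sum_list_distinct_conv_sum_set)

lemma toggle_plus_alt: "toggle_plus Q le q I =
   (if q \<in> Q \<and> q \<notin> I \<and> (\<forall>p\<in>Q. p \<notin> I \<longrightarrow> le p q \<longrightarrow> p = q) then 1 else 0)"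
  unfolding toggle_plus_def by auto

lemma cert_list:
  assumes "po (set L) le" "okl le L"
    and "\<forall>I\<in>set (idl le L). sum_list (map (\<lambda>q. (1 + c q) * toggle_minus (set L) le q (set I)
            - c q * toggle_plus (set L) le q (set I)) L) = C"
  shows "cert (set L) le c C"
  unfolding cert_def idl_correct[OF assms(1,2)]
  using assms(3) unfolding sum_set_distinct[OF okl_distinct[OF assms(1,2)]] by auto

definition L6 :: "(nat \<times> nat) list" where
  "L6 = [(4,4),(3,4),(3,3),(2,4),(2,3),(1,4),(2,2),(1,3),(1,2),(1,1)]"


lemma nat_range4: "1 \<le> (i::nat) \<Longrightarrow> i \<le> 4 \<Longrightarrow> i = 1 \<or> i = 2 \<or> i = 3 \<or> i = 4" by auto

lemma sd4: "shifted_delta4 = set L6"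
proof
  show "shifted_delta4 \<subseteq> set L6"
  proof
    fix x assume "x \<in> shifted_delta4"
    then obtain i j where x: "x = (i, j)" "1 \<le> i" "i \<le> j" "j \<le> 4" unfolding shifted_delta4_def by auto
    have ij: "i = 1 \<or> i = 2 \<or> i = 3 \<or> i = 4" "j = 1 \<or> j = 2 \<or> j = 3 \<or> j = 4"
      using nat_range4 x by auto
    have "(i, j) \<in> set L6" using ij x(3)
      by (elim disjE) (simp_all add: L6_def)
    then show "x \<in> set L6" using x by simp
  qed
  show "set L6 \<subseteq> shifted_delta4" unfolding L6_def shifted_delta4_def by auto
qed

definition c6 :: "nat \<times> nat \<Rightarrow> real" where
  "c6 q = (if q = (1,1) then -5/4 else if q = (1,2) then -3/2 else if q = (1,3) then -1
     else if q = (1,4) then -1/2 else if q = (2,2) then -3/4 else if q = (2,3) then -1/2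
     else if q = (2,4) then 0 else if q = (3,3) then -1/4 else if q = (3,4) then 1/2 else 1/4)"

lemma cert6: "cert shifted_delta4 prod_le c6 (5/4)"
  unfolding sd4
proof (rule cert_list)
  show "po (set L6) prod_le" by (rule po_prod_le)
  show "okl prod_le L6" by (simp add: L6_def prod_le_def)
  show "\<forall>I\<in>set (idl prod_le L6). (\<Sum>q\<leftarrow>L6. (1 + c6 q) * toggle_minus (set L6) prod_le q (set I) -
          c6 q * toggle_plus (set L6) prod_le q (set I)) = 5 / 4"
    by code_simp
qed


definition M6 :: "(nat \<times> nat) list list" where
  "M6 = [[],
    [(1,1)],
    [(1,2), (1,1)],
    [(1,3), (1,2), (1,1)],
    [(2,2), (1,2), (1,1)],
    [(2,2), (1,3), (1,2), (1,1)],
    [(1,4), (1,3), (1,2), (1,1)],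
    [(1,4), (2,2), (1,3), (1,2), (1,1)],
    [(2,3), (2,2), (1,3), (1,2), (1,1)],
    [(2,3), (1,4), (2,2), (1,3), (1,2), (1,1)],
    [(2,4), (2,3), (1,4), (2,2), (1,3), (1,2), (1,1)],
    [(3,3), (2,3), (2,2), (1,3), (1,2), (1,1)],
    [(3,3), (2,3), (1,4), (2,2), (1,3), (1,2), (1,1)],
    [(3,3), (2,4), (2,3), (1,4), (2,2), (1,3), (1,2), (1,1)],
    [(3,4), (3,3), (2,4), (2,3), (1,4), (2,2), (1,3), (1,2), (1,1)],
    [(4,4), (3,4), (3,3), (2,4), (2,3), (1,4), (2,2), (1,3), (1,2), (1,1)]]"

lemma idl6: "idl prod_le L6 = M6"
  unfolding L6_def M6_def by (simp add: prod_le_def idl_step_def)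

lemma okl6: "okl prod_le L6" by (simp add: L6_def prod_le_def)

lemma PE6_M6: "PE6 = set (map set M6)"
  unfolding PE6_def sd4 idl_correct[OF po_prod_le okl6] idl6 ..

definition U7 :: "nat list list" where
  "U7 = [[0,1,2,3,4,5,6,7,8,9,10,11,12,13,14,15],
    [1,2,3,4,5,6,7,8,9,10,11,12,13,14,15],
    [2,3,4,5,6,7,8,9,10,11,12,13,14,15],
    [3,5,6,7,8,9,10,11,12,13,14,15],
    [4,5,7,8,9,10,11,12,13,14,15],
    [5,7,8,9,10,11,12,13,14,15],
    [6,7,9,10,12,13,14,15],
    [7,9,10,12,13,14,15],
    [8,9,10,11,12,13,14,15],
    [9,10,12,13,14,15],
    [10,13,14,15],
    [11,12,13,14,15],
    [12,13,14,15],
    [13,14,15],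
    [14,15],
    [15]]"

definition le7 :: "nat \<Rightarrow> nat \<Rightarrow> bool" where
  "le7 i j = (j \<in> set (U7 ! i))"

definition c7 :: "nat \<Rightarrow> real" where
  "c7 i = [(-4/3), (-5/3), (-2), (-4/3), (-1), (-1), (-2/3), (-1/3), (-2/3), 0, 0, (-1/3), (1/3), 1, (2/3), (1/3)] ! i"

definition L7 :: "nat list" where "L7 = [15,14,13,12,11,10,9,8,7,6,5,4,3,2,1,0]"

lemma le7_iff_list: "\<forall>i\<in>set [0..<16]. \<forall>j\<in>set [0..<16]. le7 i j \<longleftrightarrow> set (M6 ! i) \<subseteq> set (M6 ! j)"
  unfolding le7_def U7_def M6_def by code_simp

lemma M6_distinct: "distinct (map set M6)"
  unfolding M6_def by code_simp

lemma M6_len: "length M6 = 16" unfolding M6_def by simp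

lemma iso7: "poset_iso (set L7) le7 PE6 (\<subseteq>)"
proof -
  let ?f = "\<lambda>i. set (M6 ! i)"
  have L7: "set L7 = {0..<length M6}" unfolding L7_def M6_len by code_simp
  have inj: "inj_on ?f (set L7)"
  proof (rule inj_onI)
    fix i j assume "i \<in> set L7" "j \<in> set L7" "set (M6 ! i) = set (M6 ! j)"
    then show "i = j" using M6_distinct L7 unfolding distinct_conv_nth by fastforce
  qed
  have img: "?f ` set L7 = PE6"
  proof -
    have "(!) M6 ` {0..<length M6} = set M6" using nth_image[of "length M6" M6] by simp
    then have "set ` ((!) M6 ` {0..<length M6}) = set (map set M6)" by simp
    then show ?thesis unfolding PE6_M6 L7 image_image by simp
  qed
  have "bij_betw ?f (set L7) PE6" using inj img by (simp add: bij_betw_def)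
  moreover have "\<forall>x\<in>set L7. \<forall>y\<in>set L7. le7 x y \<longleftrightarrow> ?f x \<subseteq> ?f y"
    using le7_iff_list unfolding L7_def by simp
  ultimately show ?thesis unfolding poset_iso_def by blast
qed

lemma po7: "po (set L7) le7" using iso_po[OF iso7 po_subseteq] .

lemma okl7: "okl le7 L7" unfolding L7_def le7_def U7_def by code_simp

lemma le7_tab:
  "le7 0 0"
  "le7 0 (Suc 0)"
  "le7 0 2"
  "le7 0 3"
  "le7 0 4"
  "le7 0 5"
  "le7 0 6"
  "le7 0 7"
  "le7 0 8"
  "le7 0 9"
  "le7 0 10"
  "le7 0 11"
  "le7 0 12"
  "le7 0 13"
  "le7 0 14"
  "le7 0 15"
  "\<not> le7 (Suc 0) 0"
  "le7 (Suc 0) (Suc 0)"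
  "le7 (Suc 0) 2"
  "le7 (Suc 0) 3"
  "le7 (Suc 0) 4"
  "le7 (Suc 0) 5"
  "le7 (Suc 0) 6"
  "le7 (Suc 0) 7"
  "le7 (Suc 0) 8"
  "le7 (Suc 0) 9"
  "le7 (Suc 0) 10"
  "le7 (Suc 0) 11"
  "le7 (Suc 0) 12"
  "le7 (Suc 0) 13"
  "le7 (Suc 0) 14"
  "le7 (Suc 0) 15"
  "\<not> le7 2 0"
  "\<not> le7 2 (Suc 0)"
  "le7 2 2"
  "le7 2 3"
  "le7 2 4"
  "le7 2 5"
  "le7 2 6"
  "le7 2 7"
  "le7 2 8"
  "le7 2 9"
  "le7 2 10"
  "le7 2 11"
  "le7 2 12"
  "le7 2 13"
  "le7 2 14"
  "le7 2 15"
  "\<not> le7 3 0"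
  "\<not> le7 3 (Suc 0)"
  "\<not> le7 3 2"
  "le7 3 3"
  "\<not> le7 3 4"
  "le7 3 5"
  "le7 3 6"
  "le7 3 7"
  "le7 3 8"
  "le7 3 9"
  "le7 3 10"
  "le7 3 11"
  "le7 3 12"
  "le7 3 13"
  "le7 3 14"
  "le7 3 15"
  "\<not> le7 4 0"
  "\<not> le7 4 (Suc 0)"
  "\<not> le7 4 2"
  "\<not> le7 4 3"
  "le7 4 4"
  "le7 4 5"
  "\<not> le7 4 6"
  "le7 4 7"
  "le7 4 8"
  "le7 4 9"
  "le7 4 10"
  "le7 4 11"
  "le7 4 12"
  "le7 4 13"
  "le7 4 14"
  "le7 4 15"
  "\<not> le7 5 0"
  "\<not> le7 5 (Suc 0)"
  "\<not> le7 5 2"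
  "\<not> le7 5 3"
  "\<not> le7 5 4"
  "le7 5 5"
  "\<not> le7 5 6"
  "le7 5 7"
  "le7 5 8"
  "le7 5 9"
  "le7 5 10"
  "le7 5 11"
  "le7 5 12"
  "le7 5 13"
  "le7 5 14"
  "le7 5 15"
  "\<not> le7 6 0"
  "\<not> le7 6 (Suc 0)"
  "\<not> le7 6 2"
  "\<not> le7 6 3"
  "\<not> le7 6 4"
  "\<not> le7 6 5"
  "le7 6 6"
  "le7 6 7"
  "\<not> le7 6 8"
  "le7 6 9"
  "le7 6 10"
  "\<not> le7 6 11"
  "le7 6 12"
  "le7 6 13"
  "le7 6 14"
  "le7 6 15"
  "\<not> le7 7 0"
  "\<not> le7 7 (Suc 0)"
  "\<not> le7 7 2"
  "\<not> le7 7 3"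
  "\<not> le7 7 4"
  "\<not> le7 7 5"
  "\<not> le7 7 6"
  "le7 7 7"
  "\<not> le7 7 8"
  "le7 7 9"
  "le7 7 10"
  "\<not> le7 7 11"
  "le7 7 12"
  "le7 7 13"
  "le7 7 14"
  "le7 7 15"
  "\<not> le7 8 0"
  "\<not> le7 8 (Suc 0)"
  "\<not> le7 8 2"
  "\<not> le7 8 3"
  "\<not> le7 8 4"
  "\<not> le7 8 5"
  "\<not> le7 8 6"
  "\<not> le7 8 7"
  "le7 8 8"
  "le7 8 9"
  "le7 8 10"
  "le7 8 11"
  "le7 8 12"
  "le7 8 13"
  "le7 8 14"
  "le7 8 15"
  "\<not> le7 9 0"
  "\<not> le7 9 (Suc 0)"
  "\<not> le7 9 2"
  "\<not> le7 9 3"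
  "\<not> le7 9 4"
  "\<not> le7 9 5"
  "\<not> le7 9 6"
  "\<not> le7 9 7"
  "\<not> le7 9 8"
  "le7 9 9"
  "le7 9 10"
  "\<not> le7 9 11"
  "le7 9 12"
  "le7 9 13"
  "le7 9 14"
  "le7 9 15"
  "\<not> le7 10 0"
  "\<not> le7 10 (Suc 0)"
  "\<not> le7 10 2"
  "\<not> le7 10 3"
  "\<not> le7 10 4"
  "\<not> le7 10 5"
  "\<not> le7 10 6"
  "\<not> le7 10 7"
  "\<not> le7 10 8"
  "\<not> le7 10 9"
  "le7 10 10"
  "\<not> le7 10 11"
  "\<not> le7 10 12"
  "le7 10 13"
  "le7 10 14"
  "le7 10 15"
  "\<not> le7 11 0"
  "\<not> le7 11 (Suc 0)"
  "\<not> le7 11 2"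
  "\<not> le7 11 3"
  "\<not> le7 11 4"
  "\<not> le7 11 5"
  "\<not> le7 11 6"
  "\<not> le7 11 7"
  "\<not> le7 11 8"
  "\<not> le7 11 9"
  "\<not> le7 11 10"
  "le7 11 11"
  "le7 11 12"
  "le7 11 13"
  "le7 11 14"
  "le7 11 15"
  "\<not> le7 12 0"
  "\<not> le7 12 (Suc 0)"
  "\<not> le7 12 2"
  "\<not> le7 12 3"
  "\<not> le7 12 4"
  "\<not> le7 12 5"
  "\<not> le7 12 6"
  "\<not> le7 12 7"
  "\<not> le7 12 8"
  "\<not> le7 12 9"
  "\<not> le7 12 10"
  "\<not> le7 12 11"
  "le7 12 12"
  "le7 12 13"
  "le7 12 14"
  "le7 12 15"
  "\<not> le7 13 0"
  "\<not> le7 13 (Suc 0)"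
  "\<not> le7 13 2"
  "\<not> le7 13 3"
  "\<not> le7 13 4"
  "\<not> le7 13 5"
  "\<not> le7 13 6"
  "\<not> le7 13 7"
  "\<not> le7 13 8"
  "\<not> le7 13 9"
  "\<not> le7 13 10"
  "\<not> le7 13 11"
  "\<not> le7 13 12"
  "le7 13 13"
  "le7 13 14"
  "le7 13 15"
  "\<not> le7 14 0"
  "\<not> le7 14 (Suc 0)"
  "\<not> le7 14 2"
  "\<not> le7 14 3"
  "\<not> le7 14 4"
  "\<not> le7 14 5"
  "\<not> le7 14 6"
  "\<not> le7 14 7"
  "\<not> le7 14 8"
  "\<not> le7 14 9"
  "\<not> le7 14 10"
  "\<not> le7 14 11"
  "\<not> le7 14 12"
  "\<not> le7 14 13"
  "le7 14 14"
  "le7 14 15"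
  "\<not> le7 15 0"
  "\<not> le7 15 (Suc 0)"
  "\<not> le7 15 2"
  "\<not> le7 15 3"
  "\<not> le7 15 4"
  "\<not> le7 15 5"
  "\<not> le7 15 6"
  "\<not> le7 15 7"
  "\<not> le7 15 8"
  "\<not> le7 15 9"
  "\<not> le7 15 10"
  "\<not> le7 15 11"
  "\<not> le7 15 12"
  "\<not> le7 15 13"
  "\<not> le7 15 14"
  "le7 15 15"
  by (simp_all add: le7_def U7_def)

lemma c7_tab: "c7 0 = -4/3"
  "c7 (Suc 0) = -5/3"
  "c7 2 = -2"
  "c7 3 = -4/3"
  "c7 4 = -1"
  "c7 5 = -1"
  "c7 6 = -2/3"
  "c7 7 = -1/3"
  "c7 8 = -2/3"
  "c7 9 = 0"
  "c7 10 = 0"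
  "c7 11 = -1/3"
  "c7 12 = 1/3"
  "c7 13 = 1"
  "c7 14 = 2/3"
  "c7 15 = 1/3"
  by (simp_all add: c7_def)

lemma cert7: "cert (set L7) le7 c7 (4/3)"
proof (rule cert_list[OF po7 okl7])
  show "\<forall>I\<in>set (idl le7 L7). (\<Sum>q\<leftarrow>L7. (1 + c7 q) * toggle_minus (set L7) le7 q (set I) -
          c7 q * toggle_plus (set L7) le7 q (set I)) = 4 / 3"
    unfolding L7_def by (simp add: le7_tab c7_tab toggle_minus_def toggle_plus_alt idl_step_def)
qed


theorem theorem6p3:
  fixes P :: "'a set" and le :: "'a \<Rightarrow> 'a \<Rightarrow> bool"
  assumes "connected_minuscule P le"
  shows "distributive_lattice_on P le \<and>
    (\<exists>(Q :: 'a set) leQ. finite_poset Q leQ \<and>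
       poset_iso P le (order_ideals Q leQ) (\<subseteq>) \<and>
       (\<forall>(Q' :: 'b set) leQ'. finite_poset Q' leQ' \<and>
          poset_iso P le (order_ideals Q' leQ') (\<subseteq>) \<longrightarrow> poset_iso Q leQ Q' leQ') \<and>
       tCDE Q leQ)"
proof -
  consider (A) a b where "1 \<le> a" "1 \<le> b" "poset_iso P le (chain_prod a b) prod_le"
    | (B) b where "1 \<le> b" "poset_iso P le (young_interval b) (\<le>)"
    | (C) a where "1 \<le> a" "poset_iso P le (P_a11a a) (le_a11a a)"
    | (D) "poset_iso P le PE6 (\<subseteq>)"
    | (E) "poset_iso P le PE7 (\<subseteq>)"
    using assms unfolding connected_minuscule_def by blast
  then show ?thesis
  proof cases
    case (A a b)
    obtain c C where h: "finite (QA a b)" "po (QA a b) prod_le" "cert (QA a b) prod_le c C"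
      "poset_iso (chain_prod a b) prod_le (JJ (QA a b) prod_le) (\<subseteq>)"
      using famA[OF A(1,2)] by blast
    have "poset_iso P le (JJ (QA a b) prod_le) (\<subseteq>)" using iso_trans[OF A(3) h(4)] .
    then show ?thesis using main_red[OF h(1-3)] by blast
  next
    case (B b)
    obtain c C where h: "finite (chain_prod 2 b)" "po (chain_prod 2 b) prod_le" "cert (chain_prod 2 b) prod_le c C"
      "poset_iso (young_interval b) (\<le>) (JJ (chain_prod 2 b) prod_le) (\<subseteq>)"
      using famB by blast
    have "poset_iso P le (JJ (chain_prod 2 b) prod_le) (\<subseteq>)" using iso_trans[OF B(2) h(4)] .
    then show ?thesis using main_red[OF h(1-3)] by blast
  next
    case (C a)
    obtain c C where h: "finite (QC a)" "po (QC a) leC" "cert (QC a) leC c C"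
      "poset_iso (P_a11a a) (le_a11a a) (JJ (QC a) leC) (\<subseteq>)"
      using famC[OF C(1)] by blast
    have "poset_iso P le (JJ (QC a) leC) (\<subseteq>)" using iso_trans[OF C(2) h(4)] .
    then show ?thesis using main_red[OF h(1-3)] by blast
  next
    case D
    have fin: "finite shifted_delta4" unfolding sd4 by simp
    have "poset_iso P le (JJ shifted_delta4 prod_le) (\<subseteq>)" using D unfolding PE6_def .
    then show ?thesis using main_red[OF fin po_prod_le cert6] by blast
  next
    case E
    have fin: "finite (set L7)" by simp
    have "poset_iso PE7 (\<subseteq>) (JJ (set L7) le7) (\<subseteq>)"
      unfolding PE7_def using J_poset_iso[OF iso_sym[OF iso7]] .
    then have "poset_iso P le (JJ (set L7) le7) (\<subseteq>)" using iso_trans[OF E] by blast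
    then show ?thesis using main_red[OF fin po7 cert7] by blast
  qed
qed

end
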